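(* Let $\mathbb{F}$ be any field, $S\subseteq\mathbb{A}$ finite and $\mathcal{O}\subseteq\mathbb{A}^I$ an $S$-ordered orbit. Every nonzero $\operatorname{Aut}(\mathbb{A}/S)$-invariant subspace $V\subseteq\operatorname{Lin}_{\mathbb{F}}\mathcal{O}$ contains $\operatorname{Cog}_{\mathbb{F}}\mathcal{O}$. In particular $\operatorname{Cog}_{\mathbb{F}}\mathcal{O}$ is nonzero and has no $\operatorname{Aut}(\mathbb{A}/S)$-invariant subspaces other than $0$ and itself.
   Context: $\mathbb{A}$ is the Fraïssé limit of the class of all totally ordered (new symbol $<$) members of a free amalgamation class $\mathscr{C}_0=\operatorname{Forb}(\mathscr{F})$ of finite irreflexive $\sigma_0$-structures, $\sigma_0$ finite with unary and binary relations (in each member of $\mathscr{F}$ any two elements $u,v$ are related: $u=v$ or $R(u,v)$ or $R(v,u)$ for some binary $R$; irreflexive: binary relations hold only between distinct elements). $\operatorname{Aut}(\mathbb{A}/S)$ is the group of automorphisms fixing $S$ pointwise. $I$ is a finite totally ordered index set; $a\in\mathbb{A}^I$ is $S$-ordered if $a_i\notin S$ and $a_i<a_j$ for $i<j$; $\mathcal{O}=\operatorname{Aut}(\mathbb{A}/S)\cdot a$ for such $a$. $\operatorname{Lin}_{\mathbb{F}}\mathcal{O}$ is the space of finite formal linear combinations of elements of $\mathcal{O}$. An $\mathcal{O}$-duo $a\parallel b$ is a pair $a,b\in\mathcal{O}$ with $a_i<b_i$ for all $i$, $b_i<a_j$ for $i<j$, and $R(a_i,b_j)\iff R(a_i,a_j)\iff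 R(b_i,b_j)\iff R(b_i,a_j)$ for all binary $R\in\sigma_0$, $i,j\in I$. The cog is $a\between b=\sum_{J\subseteq I}(-1)^{|J|}c^J$ where $c^J_i=b_i$ for $i\in J$ and $c^J_i=a_i$ otherwise; $\operatorname{Cog}_{\mathbb{F}}\mathcal{O}$ is the span of all $\mathcal{O}$-cogs. *)

theory Defs
  imports Main "HOL-Library.Countable_Set"
begin

text \<open>The signature sigma_0 consists of unary relation symbols indexed by a finite
type 'p and binary relation symbols indexed by a finite type 'r.
A finite sigma_0-structure (as used for the members of the forbidden family F and
for the members of the age) is represented on the natural numbers:
a finite carrier, an interpretation of the unary symbols and of the binary symbols.\<close>

type_synonym ('p, 'r) fstruct = "nat set \<times> ('p \<Rightarrow> nat \<Rightarrow> bool) \<times> ('r \<Rightarrow> nat \<Rightarrow> nat \<Rightarrow> bool)"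

definition irreflexive_on :: "'a set \<Rightarrow> ('r \<Rightarrow> 'a \<Rightarrow> 'a \<Rightarrow> bool) \<Rightarrow> bool" where
  "irreflexive_on B R \<longleftrightarrow> (\<forall>r. \<forall>x\<in>B. \<not> R r x x)"

definition emb ::
  "'b set \<Rightarrow> ('p \<Rightarrow> 'b \<Rightarrow> bool) \<Rightarrow> ('r \<Rightarrow> 'b \<Rightarrow> 'b \<Rightarrow> bool) \<Rightarrow>
   'a set \<Rightarrow> ('p \<Rightarrow> 'a \<Rightarrow> bool) \<Rightarrow> ('r \<Rightarrow> 'a \<Rightarrow> 'a \<Rightarrow> bool) \<Rightarrow> ('b \<Rightarrow> 'a) \<Rightarrow> bool" where
  "emb B UB RB C UC RC f \<longleftrightarrow>
     inj_on f B \<and> f ` B \<subseteq> C \<and>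
     (\<forall>p. \<forall>x\<in>B. UB p x \<longleftrightarrow> UC p (f x)) \<and>
     (\<forall>r. \<forall>x\<in>B. \<forall>y\<in>B. RB r x y \<longleftrightarrow> RC r (f x) (f y))"

definition oemb ::
  "'b set \<Rightarrow> ('p \<Rightarrow> 'b \<Rightarrow> bool) \<Rightarrow> ('r \<Rightarrow> 'b \<Rightarrow> 'b \<Rightarrow> bool) \<Rightarrow> ('b \<Rightarrow> 'b \<Rightarrow> bool) \<Rightarrow>
   'a set \<Rightarrow> ('p \<Rightarrow> 'a \<Rightarrow> bool) \<Rightarrow> ('r \<Rightarrow> 'a \<Rightarrow> 'a \<Rightarrow> bool) \<Rightarrow> ('a \<Rightarrow> 'a \<Rightarrow> bool) \<Rightarrow>
   ('b \<Rightarrow> 'a) \<Rightarrow> bool" where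
  "oemb B UB RB LB C UC RC LC f \<longleftrightarrow>
     emb B UB RB C UC RC f \<and> (\<forall>x\<in>B. \<forall>y\<in>B. LB x y \<longleftrightarrow> LC (f x) (f y))"

definition strict_linorder_on :: "'a set \<Rightarrow> ('a \<Rightarrow> 'a \<Rightarrow> bool) \<Rightarrow> bool" where
  "strict_linorder_on B L \<longleftrightarrow>
     (\<forall>x\<in>B. \<not> L x x) \<and>
     (\<forall>x\<in>B. \<forall>y\<in>B. \<forall>z\<in>B. L x y \<longrightarrow> L y z \<longrightarrow> L x z) \<and>
     (\<forall>x\<in>B. \<forall>y\<in>B. x \<noteq> y \<longrightarrow> L x y \<or> L y x)"

definition irreducible_fstruct :: "('p, 'r) fstruct \<Rightarrow> bool" where
  "irreducible_fstruct M \<longleftrightarrow>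
     (case M of (B, UB, RB) \<Rightarrow> finite B \<and>
        (\<forall>u\<in>B. \<forall>v\<in>B. u \<noteq> v \<longrightarrow> (\<exists>r. RB r u v \<or> RB r v u)))"

definition forb :: "('p, 'r) fstruct set \<Rightarrow> 'a set \<Rightarrow> ('p \<Rightarrow> 'a \<Rightarrow> bool) \<Rightarrow> ('r \<Rightarrow> 'a \<Rightarrow> 'a \<Rightarrow> bool) \<Rightarrow> bool" where
  "forb F C U R \<longleftrightarrow>
     irreflexive_on C R \<and>
     (\<forall>M\<in>F. case M of (B, UB, RB) \<Rightarrow> \<not> (\<exists>f. emb B UB RB C U R f))"

text \<open>Automorphisms of the ordered structure (A,U,R,L) fixing S pointwise
(only the values on A matter).\<close>
definition autS ::
  "'a set \<Rightarrow> ('p \<Rightarrow> 'a \<Rightarrow> bool) \<Rightarrow> ('r \<Rightarrow> 'a \<Rightarrow> 'a \<Rightarrow> bool) \<Rightarrow> ('a \<Rightarrow> 'a \<Rightarrow> bool) \<Rightarrow> 'a set \<Rightarrow>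
   ('a \<Rightarrow> 'a) set" where
  "autS A U R L S =
     {g. bij_betw g A A \<and> oemb A U R L A U R L g \<and> (\<forall>s\<in>S. g s = s)}"

definition fraisse_limit_ordered_forb ::
  "('p, 'r) fstruct set \<Rightarrow> 'a set \<Rightarrow> ('p \<Rightarrow> 'a \<Rightarrow> bool) \<Rightarrow> ('r \<Rightarrow> 'a \<Rightarrow> 'a \<Rightarrow> bool) \<Rightarrow>
   ('a \<Rightarrow> 'a \<Rightarrow> bool) \<Rightarrow> bool" where
  "fraisse_limit_ordered_forb F A U R L \<longleftrightarrow>
     countable A \<and>
     strict_linorder_on A L \<and>
     forb F A U R \<and>
     (\<forall>B UB RB LB. finite (B :: nat set) \<and> strict_linorder_on B LB \<and> forb F B UB RB \<longrightarrow>
        (\<exists>f. oemb B UB RB LB A U R L f)) \<and>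
     (\<forall>B h. finite B \<and> B \<subseteq> A \<and> oemb B U R L A U R L h \<longrightarrow>
        (\<exists>g\<in>autS A U R L {}. \<forall>x\<in>B. g x = h x))"

text \<open>Tuples a in A^I with I a finite totally ordered index set are represented as lists
(I = {0,...,n-1} with its natural order).\<close>

definition S_ordered :: "'a set \<Rightarrow> ('a \<Rightarrow> 'a \<Rightarrow> bool) \<Rightarrow> 'a set \<Rightarrow> 'a list \<Rightarrow> bool" where
  "S_ordered A L S a \<longleftrightarrow>
     set a \<subseteq> A \<and> (\<forall>i<length a. a ! i \<notin> S) \<and>
     (\<forall>i<length a. \<forall>j<length a. i < j \<longrightarrow> L (a ! i) (a ! j))"

definition orbit :: "('a \<Rightarrow> 'a) set \<Rightarrow> 'a list \<Rightarrow> 'a list set" where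
  "orbit G a = {map g a | g. g \<in> G}"

text \<open>Lin_F Orb: finitely supported functions Orb -> F (formal linear combinations).\<close>
definition Lin :: "'a list set \<Rightarrow> ('a list \<Rightarrow> 'k::field) set" where
  "Lin Orb = {v. finite {x. v x \<noteq> 0} \<and> {x. v x \<noteq> 0} \<subseteq> Orb}"

definition subspace_of :: "('a list \<Rightarrow> 'k::field) set \<Rightarrow> ('a list \<Rightarrow> 'k) set \<Rightarrow> bool" where
  "subspace_of V W \<longleftrightarrow> V \<subseteq> W \<and> (\<lambda>_. 0) \<in> V \<and>
     (\<forall>v\<in>V. \<forall>w\<in>V. (\<lambda>x. v x + w x) \<in> V) \<and>
     (\<forall>c. \<forall>v\<in>V. (\<lambda>x. c * v x) \<in> V)"

text \<open>Action of an automorphism g on formal linear combinations: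
g . (sum c_x x) = sum c_x (g x).\<close>
definition act :: "('a \<Rightarrow> 'a) \<Rightarrow> ('a list \<Rightarrow> 'k::field) \<Rightarrow> ('a list \<Rightarrow> 'k)" where
  "act g v = (\<lambda>y. \<Sum>x\<in>{x. v x \<noteq> 0 \<and> map g x = y}. v x)"

definition invariant :: "('a \<Rightarrow> 'a) set \<Rightarrow> ('a list \<Rightarrow> 'k::field) set \<Rightarrow> bool" where
  "invariant G V \<longleftrightarrow> (\<forall>g\<in>G. \<forall>v\<in>V. act g v \<in> V)"

definition duo :: "('r \<Rightarrow> 'a \<Rightarrow> 'a \<Rightarrow> bool) \<Rightarrow> ('a \<Rightarrow> 'a \<Rightarrow> bool) \<Rightarrow> 'a list set \<Rightarrow>
    'a list \<Rightarrow> 'a list \<Rightarrow> bool" where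
  "duo R L Orb a b \<longleftrightarrow> a \<in> Orb \<and> b \<in> Orb \<and>
     (\<forall>i<length a. L (a ! i) (b ! i)) \<and>
     (\<forall>i<length a. \<forall>j<length a. i < j \<longrightarrow> L (b ! i) (a ! j)) \<and>
     (\<forall>r. \<forall>i<length a. \<forall>j<length a.
        (R r (a ! i) (b ! j) \<longleftrightarrow> R r (a ! i) (a ! j)) \<and>
        (R r (a ! i) (a ! j) \<longleftrightarrow> R r (b ! i) (b ! j)) \<and>
        (R r (b ! i) (b ! j) \<longleftrightarrow> R r (b ! i) (a ! j)))"

definition mixJ :: "'a list \<Rightarrow> 'a list \<Rightarrow> nat set \<Rightarrow> 'a list" where
  "mixJ a b J = map (\<lambda>i. if i \<in> J then b ! i else a ! i) [0..<length a]"

definition cog :: "'a list \<Rightarrow> 'a list \<Rightarrow> ('a list \<Rightarrow> 'k::field)" where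
  "cog a b = (\<lambda>y. \<Sum>J\<in>Pow {..<length a}. if y = mixJ a b J then (-1) ^ card J else 0)"

definition Cog :: "('r \<Rightarrow> 'a \<Rightarrow> 'a \<Rightarrow> bool) \<Rightarrow> ('a \<Rightarrow> 'a \<Rightarrow> bool) \<Rightarrow> 'a list set \<Rightarrow>
    ('a list \<Rightarrow> 'k::field) set" where
  "Cog R L Orb = {v. \<exists>C c. finite C \<and> C \<subseteq> {cog a b | a b. duo R L Orb a b} \<and>
                   v = (\<lambda>y. \<Sum>w\<in>C. c w * w y)}"

end

theory Submission
  imports Defs
begin

locale fl =
  fixes F :: "('p, 'r) fstruct set"
    and A :: "'a set" and U :: "'p \<Rightarrow> 'a \<Rightarrow> bool" and R :: "'r \<Rightarrow> 'a \<Rightarrow> 'a \<Rightarrow> bool"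
    and L :: "'a \<Rightarrow> 'a \<Rightarrow> bool"
    and S :: "'a set" and a0 :: "'a list"
  assumes irr: "\<forall>M\<in>F. irreducible_fstruct M"
    and fr: "fraisse_limit_ordered_forb F A U R L"
    and finS: "finite S" and SA: "S \<subseteq> A"
    and Sord: "S_ordered A L S a0"
begin

lemma slo: "strict_linorder_on A L" using fr unfolding fraisse_limit_ordered_forb_def by blast
lemma forbA: "forb F A U R" using fr unfolding fraisse_limit_ordered_forb_def by blast
lemma fr_ext: "finite (B :: nat set) \<Longrightarrow> strict_linorder_on B LB \<Longrightarrow> forb F B UB RB \<Longrightarrow>
        \<exists>f. oemb B UB RB LB A U R L f" using fr unfolding fraisse_limit_ordered_forb_def by blast
lemma homog: "finite B \<Longrightarrow> B \<subseteq> A \<Longrightarrow> oemb B U R L A U R L h \<Longrightarrow>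
        \<exists>g\<in>autS A U R L {}. \<forall>x\<in>B. g x = h x" using fr unfolding fraisse_limit_ordered_forb_def by blast

lemma L_irrefl: "x \<in> A \<Longrightarrow> \<not> L x x" using slo unfolding strict_linorder_on_def by blast
lemma L_trans: "x \<in> A \<Longrightarrow> y \<in> A \<Longrightarrow> z \<in> A \<Longrightarrow> L x y \<Longrightarrow> L y z \<Longrightarrow> L x z"
  using slo unfolding strict_linorder_on_def by blast
lemma L_total: "x \<in> A \<Longrightarrow> y \<in> A \<Longrightarrow> x \<noteq> y \<Longrightarrow> L x y \<or> L y x"
  using slo unfolding strict_linorder_on_def by blast
lemma L_asym: "x \<in> A \<Longrightarrow> y \<in> A \<Longrightarrow> L x y \<Longrightarrow> \<not> L y x"
  using L_trans L_irrefl by blast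
lemma R_irrefl: "x \<in> A \<Longrightarrow> \<not> R r x x"
  using forbA unfolding forb_def irreflexive_on_def by blast

lemma aut_bij: "g \<in> autS A U R L T \<Longrightarrow> bij_betw g A A" unfolding autS_def by blast
lemma aut_inj: "g \<in> autS A U R L T \<Longrightarrow> inj_on g A" unfolding autS_def bij_betw_def by blast
lemma aut_in: "g \<in> autS A U R L T \<Longrightarrow> x \<in> A \<Longrightarrow> g x \<in> A" unfolding autS_def bij_betw_def by blast
lemma aut_fix: "g \<in> autS A U R L T \<Longrightarrow> s \<in> T \<Longrightarrow> g s = s" unfolding autS_def by blast
lemma aut_R: "g \<in> autS A U R L T \<Longrightarrow> x \<in> A \<Longrightarrow> y \<in> A \<Longrightarrow> R r (g x) (g y) = R r x y"
  unfolding autS_def oemb_def emb_def by blast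
lemma aut_L: "g \<in> autS A U R L T \<Longrightarrow> x \<in> A \<Longrightarrow> y \<in> A \<Longrightarrow> L (g x) (g y) = L x y"
  unfolding autS_def oemb_def emb_def by blast
lemma aut_U: "g \<in> autS A U R L T \<Longrightarrow> x \<in> A \<Longrightarrow> U p (g x) = U p x"
  unfolding autS_def oemb_def emb_def by blast

lemma aut_comp: "g \<in> autS A U R L T \<Longrightarrow> h \<in> autS A U R L T \<Longrightarrow> g \<circ> h \<in> autS A U R L T"
proof -
  assume g: "g \<in> autS A U R L T" and h: "h \<in> autS A U R L T"
  have "bij_betw (g \<circ> h) A A" using aut_bij[OF g] aut_bij[OF h] by (rule bij_betw_trans[rotated])
  moreover have "oemb A U R L A U R L (g \<circ> h)"
    unfolding oemb_def emb_def
  proof (intro conjI allI ballI)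
    show "inj_on (g \<circ> h) A" using calculation unfolding bij_betw_def by blast
    show "(g \<circ> h) ` A \<subseteq> A" using calculation unfolding bij_betw_def by blast
    fix x y p r assume "x \<in> A" "y \<in> A"
    then show "U p x = U p ((g \<circ> h) x)" using aut_in[OF h] aut_U[OF g] aut_U[OF h] by simp
    show "R r x y = R r ((g \<circ> h) x) ((g \<circ> h) y)" using \<open>x \<in> A\<close> \<open>y \<in> A\<close> aut_in[OF h] aut_R[OF g] aut_R[OF h] by simp
    show "L x y = L ((g \<circ> h) x) ((g \<circ> h) y)" using \<open>x \<in> A\<close> \<open>y \<in> A\<close> aut_in[OF h] aut_L[OF g] aut_L[OF h] by simp
  qed
  moreover have "\<forall>s\<in>T. (g \<circ> h) s = s" using aut_fix[OF g] aut_fix[OF h] by simp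
  ultimately show ?thesis unfolding autS_def by blast
qed

lemma hom_fix: assumes "finite B" "B \<subseteq> A" "oemb B U R L A U R L h" "T \<subseteq> B" "\<forall>s\<in>T. h s = s"
  shows "\<exists>g\<in>autS A U R L T. \<forall>x\<in>B. g x = h x"
proof -
  obtain g where g: "g \<in> autS A U R L {}" "\<forall>x\<in>B. g x = h x" using homog[OF assms(1-3)] by blast
  have "\<forall>s\<in>T. g s = s" using g(2) assms(4,5) by (metis subsetD)
  then have "g \<in> autS A U R L T" using g(1) unfolding autS_def by simp
  then show ?thesis using g by blast
qed

definition twin :: "'a set \<Rightarrow> 'a \<Rightarrow> 'a \<Rightarrow> bool" where
  "twin D x x' \<longleftrightarrow> x' \<in> A \<and> x' \<notin> D \<and> L x x' \<and> (\<forall>r. \<not> R r x x' \<and> \<not> R r x' x) \<and>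
     (\<forall>p. U p x' = U p x) \<and>
     (\<forall>y\<in>D. y \<noteq> x \<longrightarrow> (\<forall>r. (R r y x' = R r y x) \<and> (R r x' y = R r x y)) \<and>
          (L y x' = L y x) \<and> (L x' y = L x y))"

lemma twin_mono: assumes "twin D x x'" "D' \<subseteq> D" shows "twin D' x x'"
  using assms unfolding twin_def
  apply (elim conjE)
  apply (intro conjI)
       apply assumption
      apply (metis subsetD)
     apply assumption
    apply assumption
   apply assumption
  apply (intro ballI impI)
  apply (drule subsetD, assumption)
  apply (drule bspec, assumption)
  apply (erule mp, assumption)
  done

lemma twin_exists:
  assumes D: "finite D" "D \<subseteq> A" "x \<in> D"
  shows "\<exists>x'. twin D x x'"
proof -
  define N where "N = card D"
  obtain e where e: "bij_betw e {0..<N} D" using ex_bij_betw_nat_finite[OF D(1)] N_def by blast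
  define \<pi> where "\<pi> = (\<lambda>j. if j = N then x else e j)"
  define B where "B = {0..<Suc N}"
  define UB where "UB = (\<lambda>p j. U p (\<pi> j))"
  define RB where "RB = (\<lambda>r i j. \<pi> i \<noteq> \<pi> j \<and> R r (\<pi> i) (\<pi> j))"
  define LB where "LB = (\<lambda>i j. L (\<pi> i) (\<pi> j) \<or> (\<pi> i = \<pi> j \<and> i \<noteq> N \<and> j = N))"
  have piA: "\<And>j. j \<in> B \<Longrightarrow> \<pi> j \<in> A" using e D unfolding \<pi>_def B_def bij_betw_def by auto
  have pie: "\<And>i j. i \<in> B \<Longrightarrow> j \<in> B \<Longrightarrow> \<pi> i = \<pi> j \<Longrightarrow> i \<noteq> j \<Longrightarrow> i = N \<or> j = N"
  proof -
    fix i j assume "i \<in> B" "j \<in> B" "\<pi> i = \<pi> j" "i \<noteq> j"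
    show "i = N \<or> j = N"
    proof (rule ccontr)
      assume "\<not> (i = N \<or> j = N)"
      then have "i < N" "j < N" "e i = e j" using \<open>i \<in> B\<close> \<open>j \<in> B\<close> \<open>\<pi> i = \<pi> j\<close> unfolding B_def \<pi>_def by auto
      then show False using e \<open>i \<noteq> j\<close> unfolding bij_betw_def inj_on_def by auto
    qed
  qed
  have "strict_linorder_on B LB"
    unfolding strict_linorder_on_def
  proof (intro conjI ballI impI)
    fix i assume "i \<in> B" then show "\<not> LB i i" unfolding LB_def using L_irrefl piA by auto
  next
    fix i j k assume ijk: "i \<in> B" "j \<in> B" "k \<in> B" "LB i j" "LB j k"
    have A3: "\<pi> i \<in> A" "\<pi> j \<in> A" "\<pi> k \<in> A" using piA ijk by auto
    show "LB i k"
    proof (cases "L (\<pi> i) (\<pi> j)")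
      case True
      then show ?thesis using ijk(5) L_trans[OF A3] unfolding LB_def by auto
    next
      case False
      then have "\<pi> i = \<pi> j" "j = N" "i \<noteq> N" using ijk(4) unfolding LB_def by auto
      then show ?thesis using ijk(5) unfolding LB_def by auto
    qed
  next
    fix i j assume ij: "i \<in> B" "j \<in> B" "i \<noteq> j"
    show "LB i j \<or> LB j i"
    proof (cases "\<pi> i = \<pi> j")
      case True then show ?thesis using pie[OF ij(1,2) True ij(3)] ij(3) unfolding LB_def by auto
    next
      case False then show ?thesis using L_total[OF piA[OF ij(1)] piA[OF ij(2)]] unfolding LB_def by auto
    qed
  qed
  moreover have "forb F B UB RB"
    unfolding forb_def
  proof (intro conjI ballI)
    show "irreflexive_on B RB" unfolding irreflexive_on_def RB_def by auto
  next
    fix M assume M: "M \<in> F"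
    obtain BM UM RM where Mdef: "M = (BM, UM, RM)" by (cases M) auto
    have irrM: "\<forall>u\<in>BM. \<forall>v\<in>BM. u \<noteq> v \<longrightarrow> (\<exists>r. RM r u v \<or> RM r v u)"
      using irr M unfolding Mdef irreducible_fstruct_def by auto
    have noA: "\<not> (\<exists>f. emb BM UM RM A U R f)" using forbA M unfolding forb_def Mdef by auto
    show "case M of (BM, UM, RM) \<Rightarrow> \<not> (\<exists>f. emb BM UM RM B UB RB f)"
      unfolding Mdef
    proof (simp, intro allI notI)
      fix f assume f: "emb BM UM RM B UB RB f"
      have fB: "\<And>u. u \<in> BM \<Longrightarrow> f u \<in> B" using f unfolding emb_def by auto
      have "emb BM UM RM A U R (\<pi> \<circ> f)"
        unfolding emb_def
      proof (intro conjI)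
        show "inj_on (\<pi> \<circ> f) BM"
        proof (rule inj_onI)
          fix u v assume uv: "u \<in> BM" "v \<in> BM" "(\<pi> \<circ> f) u = (\<pi> \<circ> f) v"
          show "u = v"
          proof (rule ccontr)
            assume "u \<noteq> v"
            then obtain r where "RM r u v \<or> RM r v u" using irrM uv by blast
            then have "RB r (f u) (f v) \<or> RB r (f v) (f u)" using f uv unfolding emb_def by blast
            then show False using uv unfolding RB_def by auto
          qed
        qed
        show "(\<pi> \<circ> f) ` BM \<subseteq> A" using fB piA by auto
        show "\<forall>p. \<forall>u\<in>BM. UM p u = U p ((\<pi> \<circ> f) u)" using f unfolding emb_def UB_def by auto
        show "\<forall>r. \<forall>u\<in>BM. \<forall>v\<in>BM. RM r u v = R r ((\<pi> \<circ> f) u) ((\<pi> \<circ> f) v)"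
        proof (intro allI ballI)
          fix r u v assume uv: "u \<in> BM" "v \<in> BM"
          have "RM r u v = RB r (f u) (f v)" using f uv unfolding emb_def by blast
          also have "\<dots> = R r ((\<pi> \<circ> f) u) ((\<pi> \<circ> f) v)" unfolding RB_def using R_irrefl piA fB uv by auto
          finally show "RM r u v = R r ((\<pi> \<circ> f) u) ((\<pi> \<circ> f) v)" .
        qed
      qed
      then show False using noA by blast
    qed
  qed
  moreover have "finite B" unfolding B_def by simp
  ultimately obtain f where f: "oemb B UB RB LB A U R L f" using fr_ext by blast
  have fA: "\<And>j. j \<in> B \<Longrightarrow> f j \<in> A" using f unfolding oemb_def emb_def by auto
  have finj: "inj_on f B" using f unfolding oemb_def emb_def by auto
  have fU: "\<And>p j. j \<in> B \<Longrightarrow> U p (f j) = UB p j" using f unfolding oemb_def emb_def by auto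
  have fR: "\<And>r i j. i \<in> B \<Longrightarrow> j \<in> B \<Longrightarrow> R r (f i) (f j) = RB r i j" using f unfolding oemb_def emb_def by auto
  have fL: "\<And>i j. i \<in> B \<Longrightarrow> j \<in> B \<Longrightarrow> L (f i) (f j) = LB i j" using f unfolding oemb_def by auto
  define B0 where "B0 = f ` {0..<N}"
  define h where "h = (\<lambda>y. \<pi> (inv_into B f y))"
  have NB: "{0..<N} \<subseteq> B" unfolding B_def by auto
  have hf: "\<And>j. j < N \<Longrightarrow> h (f j) = e j"
  proof -
    fix j assume "j < N"
    then have "inv_into B f (f j) = j" using finj NB by (auto intro: inv_into_f_f)
    then show "h (f j) = e j" unfolding h_def \<pi>_def using \<open>j < N\<close> by auto
  qed
  have eA: "\<And>j. j < N \<Longrightarrow> e j \<in> A" using e D unfolding bij_betw_def by auto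
  have einj: "\<And>i j. i < N \<Longrightarrow> j < N \<Longrightarrow> e i = e j \<Longrightarrow> i = j" using e unfolding bij_betw_def inj_on_def by auto
  have pi_lt: "\<And>j. j < N \<Longrightarrow> \<pi> j = e j" unfolding \<pi>_def by auto
  have "oemb B0 U R L A U R L h"
    unfolding oemb_def emb_def B0_def
  proof (intro conjI)
    show "inj_on h (f ` {0..<N})" by (rule inj_onI) (auto simp: hf dest: einj)
    show "h ` f ` {0..<N} \<subseteq> A" using hf eA by auto
    show "\<forall>p. \<forall>x\<in>f ` {0..<N}. U p x = U p (h x)" using hf fU NB unfolding UB_def by (auto simp: pi_lt)
    show "\<forall>r. \<forall>x\<in>f ` {0..<N}. \<forall>y\<in>f ` {0..<N}. R r x y = R r (h x) (h y)"
    proof (intro allI ballI)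
      fix r x y assume "x \<in> f ` {0..<N}" "y \<in> f ` {0..<N}"
      then obtain i j where ij: "i < N" "j < N" "x = f i" "y = f j" by auto
      have "i \<in> B" "j \<in> B" using NB ij by auto
      then have "R r x y = RB r i j" using fR ij by simp
      also have "\<dots> = R r (e i) (e j)" unfolding RB_def using pi_lt ij R_irrefl eA by auto
      finally show "R r x y = R r (h x) (h y)" using hf ij by simp
    qed
    show "\<forall>x\<in>f ` {0..<N}. \<forall>y\<in>f ` {0..<N}. L x y = L (h x) (h y)"
    proof (intro ballI)
      fix x y assume "x \<in> f ` {0..<N}" "y \<in> f ` {0..<N}"
      then obtain i j where ij: "i < N" "j < N" "x = f i" "y = f j" by auto
      have "i \<in> B" "j \<in> B" using NB ij by auto
      then have "L x y = LB i j" using fL ij by simp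
      also have "\<dots> = L (e i) (e j)" unfolding LB_def using pi_lt ij by auto
      finally show "L x y = L (h x) (h y)" using hf ij by simp
    qed
  qed
  moreover have "finite B0" "B0 \<subseteq> A" unfolding B0_def using fA NB by auto
  ultimately obtain \<sigma> where \<sigma>: "\<sigma> \<in> autS A U R L {}" "\<forall>y\<in>B0. \<sigma> y = h y" using homog by blast
  define x' where "x' = \<sigma> (f N)"
  have NinB: "N \<in> B" unfolding B_def by auto
  have De: "\<And>y. y \<in> D \<Longrightarrow> \<exists>j<N. y = e j \<and> y = \<sigma> (f j)"
  proof -
    fix y assume "y \<in> D"
    then obtain j where j: "j < N" "y = e j" using e unfolding bij_betw_def by auto
    then have "\<sigma> (f j) = e j" using \<sigma>(2) hf unfolding B0_def by auto
    then show "\<exists>j<N. y = e j \<and> y = \<sigma> (f j)" using j by auto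
  qed
  have piN: "\<pi> N = x" unfolding \<pi>_def by simp
  have sL: "\<And>i j. i \<in> B \<Longrightarrow> j \<in> B \<Longrightarrow> L (\<sigma> (f i)) (\<sigma> (f j)) = LB i j"
    using aut_L[OF \<sigma>(1)] fA fL by simp
  have sR: "\<And>r i j. i \<in> B \<Longrightarrow> j \<in> B \<Longrightarrow> R r (\<sigma> (f i)) (\<sigma> (f j)) = RB r i j"
    using aut_R[OF \<sigma>(1)] fA fR by simp
  have sU: "\<And>p i. i \<in> B \<Longrightarrow> U p (\<sigma> (f i)) = UB p i"
    using aut_U[OF \<sigma>(1)] fA fU by simp
  obtain jx where jx: "jx < N" "x = e jx" "x = \<sigma> (f jx)" using De D(3) by blast
  have jxB: "jx \<in> B" using jx NB by auto
  have pjx: "\<pi> jx = x" using pi_lt[OF jx(1)] jx(2) by simp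
  have jxN: "jx \<noteq> N" using jx(1) by simp
  have "twin D x x'"
    unfolding twin_def
  proof (intro conjI allI ballI impI)
    show "x' \<in> A" unfolding x'_def using aut_in[OF \<sigma>(1)] fA NinB by auto
    show "x' \<notin> D"
    proof
      assume "x' \<in> D"
      then obtain j where j: "j < N" "x' = \<sigma> (f j)" using De by blast
      have jB: "j \<in> B" using j NB by auto
      have "\<sigma> (f N) = \<sigma> (f j)" using j(2) unfolding x'_def .
      then have "f N = f j" using inj_onD[OF aut_inj[OF \<sigma>(1)]] fA[OF NinB] fA[OF jB] by blast
      then have "N = j" using inj_onD[OF finj] NinB jB by blast
      then show False using j(1) by simp
    qed
    have "L x x' = LB jx N" unfolding x'_def using sL[OF jxB NinB] jx(3) by simp
    then show "L x x'" unfolding LB_def using pjx piN jxN by simp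
    fix r
    have "R r x x' = RB r jx N" unfolding x'_def using sR[OF jxB NinB] jx(3) by simp
    then show "\<not> R r x x'" unfolding RB_def using pjx piN by simp
    have "R r x' x = RB r N jx" unfolding x'_def using sR[OF NinB jxB] jx(3) by simp
    then show "\<not> R r x' x" unfolding RB_def using pjx piN by simp
  next
    fix p
    have "U p x' = UB p N" unfolding x'_def using sU[OF NinB] by simp
    then show "U p x' = U p x" unfolding UB_def using piN by simp
  next
    fix y r assume y: "y \<in> D" "y \<noteq> x"
    obtain j where j: "j < N" "y = e j" "y = \<sigma> (f j)" using De y(1) by blast
    have jB: "j \<in> B" using j NB by auto
    have pj: "\<pi> j = y" using pi_lt[OF j(1)] j(2) by simp
    have "R r y x' = RB r j N" unfolding x'_def using sR[OF jB NinB] j(3) by simp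
    then show "R r y x' = R r y x" unfolding RB_def using pj piN y(2) by simp
    have "R r x' y = RB r N j" unfolding x'_def using sR[OF NinB jB] j(3) by simp
    then show "R r x' y = R r x y" unfolding RB_def using pj piN y(2) by auto
  next
    fix y assume y: "y \<in> D" "y \<noteq> x"
    obtain j where j: "j < N" "y = e j" "y = \<sigma> (f j)" using De y(1) by blast
    have jB: "j \<in> B" using j NB by auto
    have pj: "\<pi> j = y" using pi_lt[OF j(1)] j(2) by simp
    have "L y x' = LB j N" unfolding x'_def using sL[OF jB NinB] j(3) by simp
    then show "L y x' = L y x" unfolding LB_def using pj piN y(2) by simp
    have "L x' y = LB N j" unfolding x'_def using sL[OF NinB jB] j(3) by simp
    then show "L x' y = L x y" unfolding LB_def using pj piN y(2) by auto
  qed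
  then show ?thesis by blast
qed

end

lemma mixJ_length[simp]: "length (mixJ a b J) = length a"
  unfolding mixJ_def by simp

lemma mixJ_nth: "i < length a \<Longrightarrow> mixJ a b J ! i = (if i \<in> J then b ! i else a ! i)"
  unfolding mixJ_def by simp

lemma mixJ_empty: "mixJ a b {} = a"
  by (rule nth_equalityI) (simp_all add: mixJ_nth)

lemma mixJ_inj:
  assumes "\<forall>i<length a. a ! i \<noteq> b ! i" "J1 \<subseteq> {..<length a}" "J2 \<subseteq> {..<length a}"
    "mixJ a b J1 = mixJ a b J2"
  shows "J1 = J2"
proof (rule set_eqI)
  fix i
  show "i \<in> J1 \<longleftrightarrow> i \<in> J2"
  proof (cases "i < length a")
    case True
    have "mixJ a b J1 ! i = mixJ a b J2 ! i" using assms(4) by simp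
    then show ?thesis using True assms(1) by (auto simp: mixJ_nth split: if_splits)
  next
    case False then show ?thesis using assms(2,3) by auto
  qed
qed

lemma map_mixJ: "length b = length a \<Longrightarrow> map g (mixJ a b J) = mixJ (map g a) (map g b) J"
  by (rule nth_equalityI) (simp_all add: mixJ_nth)

lemma cog_at:
  assumes "\<forall>i<length a. a ! i \<noteq> b ! i" "J \<subseteq> {..<length a}"
  shows "cog a b (mixJ a b J) = (-1) ^ card J"
proof -
  have "cog a b (mixJ a b J) = (\<Sum>J'\<in>Pow {..<length a}. if J' = J then (-1) ^ card J' else 0)"
    unfolding cog_def
  proof (rule sum.cong)
    fix J' assume "J' \<in> Pow {..<length a}"
    then have "(mixJ a b J = mixJ a b J') = (J' = J)" using mixJ_inj[OF assms(1)] assms(2) by blast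
    then show "(if mixJ a b J = mixJ a b J' then (-1) ^ card J' else 0) = (if J' = J then (-1) ^ card J' else 0)"
      by simp
  qed simp
  also have "\<dots> = (-1) ^ card J" using assms(2) by (simp add: sum.delta')
  finally show ?thesis .
qed

lemma cog_off:
  assumes "y \<notin> mixJ a b ` Pow {..<length a}"
  shows "cog a b y = 0"
  unfolding cog_def using assms by (intro sum.neutral) auto

lemma cog_supp: "cog a b y \<noteq> 0 \<Longrightarrow> y \<in> mixJ a b ` Pow {..<length a}"
  using cog_off by blast

lemma act_map:
  assumes "inj_on g A" "\<forall>y. w y \<noteq> 0 \<longrightarrow> set y \<subseteq> A" "set x \<subseteq> A"
  shows "act g w (map g x) = w x"
proof -
  have "{x'. w x' \<noteq> 0 \<and> map g x' = map g x} = (if w x \<noteq> 0 then {x} else {})"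
  proof (rule set_eqI)
    fix x'
    show "x' \<in> {x'. w x' \<noteq> 0 \<and> map g x' = map g x} \<longleftrightarrow> x' \<in> (if w x \<noteq> 0 then {x} else {})"
    proof
      assume "x' \<in> {x'. w x' \<noteq> 0 \<and> map g x' = map g x}"
      then have x': "w x' \<noteq> 0" "map g x' = map g x" by auto
      have "inj_on g (set x' \<union> set x)" using assms(1) assms(2) x'(1) assms(3)
        by (meson inj_on_subset le_sup_iff)
      then have "x' = x" using x'(2) inj_on_map_eq_map by blast
      then show "x' \<in> (if w x \<noteq> 0 then {x} else {})" using x' by simp
    next
      assume "x' \<in> (if w x \<noteq> 0 then {x} else {})"
      then show "x' \<in> {x'. w x' \<noteq> 0 \<and> map g x' = map g x}" by (auto split: if_splits)
    qed
  qed
  then show ?thesis unfolding act_def by simp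
qed

lemma act_zero:
  assumes "\<forall>x. w x \<noteq> 0 \<longrightarrow> map g x \<noteq> y"
  shows "act g w y = 0"
proof -
  have e: "{x. w x \<noteq> 0 \<and> map g x = y} = {}" using assms by auto
  show ?thesis unfolding act_def e by (rule sum.empty)
qed

context fl
begin

abbreviation "G \<equiv> autS A U R L S"
abbreviation "Orb \<equiv> orbit (autS A U R L S) a0"
abbreviation "n \<equiv> length a0"

lemma a0A: "i < n \<Longrightarrow> a0 ! i \<in> A" using Sord unfolding S_ordered_def by auto
lemma a0S: "i < n \<Longrightarrow> a0 ! i \<notin> S" using Sord unfolding S_ordered_def by auto
lemma a0L: "i < n \<Longrightarrow> j < n \<Longrightarrow> L (a0 ! i) (a0 ! j) = (i < j)"
proof -
  assume ij: "i < n" "j < n"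
  have lt0: "\<forall>i<length a0. \<forall>j<length a0. i < j \<longrightarrow> L (a0 ! i) (a0 ! j)"
    using Sord unfolding S_ordered_def by (elim conjE)
  have lt: "\<And>i j. i < n \<Longrightarrow> j < n \<Longrightarrow> i < j \<Longrightarrow> L (a0 ! i) (a0 ! j)"
    using lt0 by simp
  show "L (a0 ! i) (a0 ! j) = (i < j)"
  proof (cases "i < j")
    case True then show ?thesis using lt ij by simp
  next
    case False
    then consider "i = j" | "j < i" by linarith
    then show ?thesis
    proof cases
      case 1 then show ?thesis using L_irrefl a0A ij by simp
    next
      case 2
      have "\<not> L (a0 ! i) (a0 ! j)" using L_asym[OF a0A[OF ij(2)] a0A[OF ij(1)] lt[OF ij(2,1) 2]] .
      then show ?thesis using 2 by simp
    qed
  qed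
qed

lemma orbE: "x \<in> Orb \<Longrightarrow> \<exists>g\<in>G. x = map g a0"
  unfolding orbit_def by blast

lemma orb_len: "x \<in> Orb \<Longrightarrow> length x = n"
proof -
  assume "x \<in> Orb"
  then obtain g where "x = map g a0" using orbE by blast
  then show ?thesis by simp
qed

lemma orb_nth: "x \<in> Orb \<Longrightarrow> \<exists>g\<in>G. \<forall>i<n. x ! i = g (a0 ! i)"
proof -
  assume "x \<in> Orb"
  then obtain g where "g \<in> G" "x = map g a0" using orbE by blast
  then show ?thesis by auto
qed

lemma orb_A: "x \<in> Orb \<Longrightarrow> i < n \<Longrightarrow> x ! i \<in> A"
proof -
  assume x: "x \<in> Orb" "i < n"
  then obtain g where "g \<in> G" "\<forall>i<n. x ! i = g (a0 ! i)" using orb_nth by blast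
  then show ?thesis using aut_in a0A x(2) by simp
qed

lemma orb_setA: "x \<in> Orb \<Longrightarrow> set x \<subseteq> A"
proof
  fix y assume x: "x \<in> Orb" and "y \<in> set x"
  then obtain i where "i < length x" "y = x ! i" by (auto simp: in_set_conv_nth)
  then show "y \<in> A" using orb_A[OF x] orb_len[OF x] by simp
qed

lemma orb_S: "x \<in> Orb \<Longrightarrow> i < n \<Longrightarrow> x ! i \<notin> S"
proof
  assume x: "x \<in> Orb" "i < n" "x ! i \<in> S"
  obtain g where g: "g \<in> G" "\<forall>i<n. x ! i = g (a0 ! i)" using orb_nth[OF x(1)] by blast
  have "g (x ! i) = x ! i" using aut_fix[OF g(1) x(3)] .
  then have "g (x ! i) = g (a0 ! i)" using g(2) x(2) by simp
  then have "x ! i = a0 ! i" using inj_onD[OF aut_inj[OF g(1)]] a0A[OF x(2)] SA x(3) by blast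
  then show False using a0S[OF x(2)] x(3) by simp
qed

lemma orb_R: "x \<in> Orb \<Longrightarrow> i < n \<Longrightarrow> j < n \<Longrightarrow> R r (x ! i) (x ! j) = R r (a0 ! i) (a0 ! j)"
proof -
  assume x: "x \<in> Orb" "i < n" "j < n"
  then obtain g where g: "g \<in> G" "\<forall>i<n. x ! i = g (a0 ! i)" using orb_nth by blast
  then show ?thesis using aut_R[OF g(1) a0A a0A] x by simp
qed
lemma orb_L: "x \<in> Orb \<Longrightarrow> i < n \<Longrightarrow> j < n \<Longrightarrow> L (x ! i) (x ! j) = (i < j)"
proof -
  assume x: "x \<in> Orb" "i < n" "j < n"
  then obtain g where g: "g \<in> G" "\<forall>i<n. x ! i = g (a0 ! i)" using orb_nth by blast
  then show ?thesis using aut_L[OF g(1) a0A a0A] a0L x by simp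
qed
lemma orb_U: "x \<in> Orb \<Longrightarrow> i < n \<Longrightarrow> U p (x ! i) = U p (a0 ! i)"
proof -
  assume x: "x \<in> Orb" "i < n"
  then obtain g where g: "g \<in> G" "\<forall>i<n. x ! i = g (a0 ! i)" using orb_nth by blast
  then show ?thesis using aut_U[OF g(1) a0A] x by simp
qed
lemma orb_RS1: "x \<in> Orb \<Longrightarrow> i < n \<Longrightarrow> s \<in> S \<Longrightarrow> R r s (x ! i) = R r s (a0 ! i)"
proof -
  assume x: "x \<in> Orb" "i < n" "s \<in> S"
  obtain g where g: "g \<in> G" "\<forall>i<n. x ! i = g (a0 ! i)" using orb_nth[OF x(1)] by blast
  have "R r s (x ! i) = R r (g s) (g (a0 ! i))" using g aut_fix[OF g(1) x(3)] x by simp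
  then show ?thesis using aut_R[OF g(1)] SA x(3) a0A[OF x(2)] by auto
qed
lemma orb_RS2: "x \<in> Orb \<Longrightarrow> i < n \<Longrightarrow> s \<in> S \<Longrightarrow> R r (x ! i) s = R r (a0 ! i) s"
proof -
  assume x: "x \<in> Orb" "i < n" "s \<in> S"
  obtain g where g: "g \<in> G" "\<forall>i<n. x ! i = g (a0 ! i)" using orb_nth[OF x(1)] by blast
  have "R r (x ! i) s = R r (g (a0 ! i)) (g s)" using g aut_fix[OF g(1) x(3)] x by simp
  then show ?thesis using aut_R[OF g(1)] SA x(3) a0A[OF x(2)] by auto
qed
lemma orb_LS1: "x \<in> Orb \<Longrightarrow> i < n \<Longrightarrow> s \<in> S \<Longrightarrow> L s (x ! i) = L s (a0 ! i)"
proof -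
  assume x: "x \<in> Orb" "i < n" "s \<in> S"
  obtain g where g: "g \<in> G" "\<forall>i<n. x ! i = g (a0 ! i)" using orb_nth[OF x(1)] by blast
  have "L s (x ! i) = L (g s) (g (a0 ! i))" using g aut_fix[OF g(1) x(3)] x by simp
  then show ?thesis using aut_L[OF g(1)] SA x(3) a0A[OF x(2)] by auto
qed
lemma orb_LS2: "x \<in> Orb \<Longrightarrow> i < n \<Longrightarrow> s \<in> S \<Longrightarrow> L (x ! i) s = L (a0 ! i) s"
proof -
  assume x: "x \<in> Orb" "i < n" "s \<in> S"
  obtain g where g: "g \<in> G" "\<forall>i<n. x ! i = g (a0 ! i)" using orb_nth[OF x(1)] by blast
  have "L (x ! i) s = L (g (a0 ! i)) (g s)" using g aut_fix[OF g(1) x(3)] x by simp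
  then show ?thesis using aut_L[OF g(1)] SA x(3) a0A[OF x(2)] by auto
qed

lemma orb_distinct: "x \<in> Orb \<Longrightarrow> distinct x"
proof -
  assume x: "x \<in> Orb"
  show "distinct x" unfolding distinct_conv_nth
  proof (intro allI impI)
    fix i j assume ij: "i < length x" "j < length x" "i \<noteq> j"
    then have "L (x ! i) (x ! j) \<or> L (x ! j) (x ! i)" using orb_L[OF x] orb_len[OF x] by auto
    then show "x ! i \<noteq> x ! j" using L_irrefl orb_A[OF x] orb_len[OF x] ij by auto
  qed
qed

lemma orb_map: "x \<in> Orb \<Longrightarrow> g \<in> G \<Longrightarrow> map g x \<in> Orb"
proof -
  assume x: "x \<in> Orb" and g: "g \<in> G"
  obtain h where h: "h \<in> G" "x = map h a0" using orbE[OF x] by blast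
  have "map g x = map (g \<circ> h) a0" using h by simp
  moreover have "g \<circ> h \<in> G" using aut_comp g h by blast
  ultimately show ?thesis unfolding orbit_def by blast
qed

lemma homl:
  assumes len: "length ys = length xs" and dx: "distinct xs"
    and xA: "set xs \<subseteq> A" and yA: "set ys \<subseteq> A"
    and xS: "set xs \<inter> S = {}" and yS: "set ys \<inter> S = {}"
    and tRL: "\<forall>i<length xs. \<forall>j<length xs. (\<forall>r. R r (xs!i) (xs!j) = R r (ys!i) (ys!j)) \<and>
                  L (xs!i) (xs!j) = L (ys!i) (ys!j)"
    and tU: "\<forall>i<length xs. \<forall>p. U p (xs!i) = U p (ys!i)"
    and tS: "\<forall>i<length xs. \<forall>s\<in>S. (\<forall>r. R r s (xs!i) = R r s (ys!i) \<and> R r (xs!i) s = R r (ys!i) s) \<and>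
                  L s (xs!i) = L s (ys!i) \<and> L (xs!i) s = L (ys!i) s"
  shows "\<exists>g\<in>G. map g xs = ys"
proof -
  define X where "X = S \<union> set xs"
  define h where "h = (\<lambda>y. case map_of (zip xs ys) y of Some z \<Rightarrow> z | None \<Rightarrow> y)"
  have hx: "\<And>i. i < length xs \<Longrightarrow> h (xs ! i) = ys ! i"
    unfolding h_def using map_of_zip_nth[OF len[symmetric] dx] len by simp
  have hS: "\<And>s. s \<in> S \<Longrightarrow> h s = s"
  proof -
    fix s assume "s \<in> S"
    then have "s \<notin> set xs" using xS by auto
    then have "map_of (zip xs ys) s = None" using len by simp
    then show "h s = s" unfolding h_def by simp
  qed
  have cases: "\<And>y. y \<in> X \<Longrightarrow> (y \<in> S \<and> h y = y) \<or> (\<exists>i<length xs. y = xs ! i \<and> h y = ys ! i)"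
    unfolding X_def using hS hx by (metis Un_iff in_set_conv_nth)
  have xsA: "\<And>i. i < length xs \<Longrightarrow> xs ! i \<in> A" using xA by auto
  have ysA: "\<And>i. i < length xs \<Longrightarrow> ys ! i \<in> A" using yA len by auto
  have xsS: "\<And>i. i < length xs \<Longrightarrow> xs ! i \<notin> S" using xS by (metis disjoint_iff nth_mem)
  have ysS: "\<And>i. i < length xs \<Longrightarrow> ys ! i \<notin> S" using yS len by (metis disjoint_iff nth_mem)
  have ysd: "\<And>i j. i < length xs \<Longrightarrow> j < length xs \<Longrightarrow> ys ! i = ys ! j \<Longrightarrow> i = j"
  proof (rule ccontr)
    fix i j assume ij: "i < length xs" "j < length xs" "ys ! i = ys ! j" "i \<noteq> j"
    then have "xs ! i \<noteq> xs ! j" using dx nth_eq_iff_index_eq by blast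
    then have "L (xs ! i) (xs ! j) \<or> L (xs ! j) (xs ! i)" using L_total xsA ij by blast
    then have "L (ys ! i) (ys ! j) \<or> L (ys ! j) (ys ! i)" using tRL ij by blast
    then show False using ij(3) L_irrefl ysA ij by metis
  qed
  have tR: "\<And>i j r. i < length xs \<Longrightarrow> j < length xs \<Longrightarrow> R r (xs!i) (xs!j) = R r (ys!i) (ys!j)"
    using tRL by blast
  have tL: "\<And>i j. i < length xs \<Longrightarrow> j < length xs \<Longrightarrow> L (xs!i) (xs!j) = L (ys!i) (ys!j)"
    using tRL by blast
  have tU': "\<And>i p. i < length xs \<Longrightarrow> U p (xs!i) = U p (ys!i)" using tU by blast
  have tS1: "\<And>i s r. i < length xs \<Longrightarrow> s \<in> S \<Longrightarrow> R r s (xs!i) = R r s (ys!i)" using tS by blast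
  have tS2: "\<And>i s r. i < length xs \<Longrightarrow> s \<in> S \<Longrightarrow> R r (xs!i) s = R r (ys!i) s" using tS by blast
  have tS3: "\<And>i s. i < length xs \<Longrightarrow> s \<in> S \<Longrightarrow> L s (xs!i) = L s (ys!i)" using tS by blast
  have tS4: "\<And>i s. i < length xs \<Longrightarrow> s \<in> S \<Longrightarrow> L (xs!i) s = L (ys!i) s" using tS by blast
  have "oemb X U R L A U R L h"
    unfolding oemb_def emb_def
  proof (intro conjI allI ballI)
    show "inj_on h X"
    proof (rule inj_onI)
      fix y z assume yz: "y \<in> X" "z \<in> X" "h y = h z"
      from cases[OF yz(1)] cases[OF yz(2)] show "y = z"
      proof (elim disjE exE conjE)
        fix i j assume a: "y = xs ! i" "h y = ys ! i" "z = xs ! j" "h z = ys ! j" "i < length xs" "j < length xs"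
        then have "i = j" using ysd[OF a(5,6)] yz(3) by simp
        then show "y = z" using a by simp
      next
        fix i assume a: "y \<in> S" "h y = y" "z = xs ! i" "h z = ys ! i" "i < length xs"
        have "ys ! i \<in> S" using a(1,2,4) yz(3) by metis
        then show "y = z" using ysS[OF a(5)] by contradiction
      next
        fix i assume a: "z \<in> S" "h z = z" "y = xs ! i" "h y = ys ! i" "i < length xs"
        have "ys ! i \<in> S" using a(1,2,4) yz(3) by metis
        then show "y = z" using ysS[OF a(5)] by contradiction
      next
        assume "y \<in> S" "h y = y" "z \<in> S" "h z = z"
        then show "y = z" using yz(3) by metis
      qed
    qed
    show "h ` X \<subseteq> A"
    proof
      fix z assume "z \<in> h ` X"
      then obtain y where y: "y \<in> X" "z = h y" by blast
      from cases[OF y(1)] show "z \<in> A"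
      proof (elim disjE exE conjE)
        assume "y \<in> S" "h y = y" then show ?thesis using y SA by auto
      next
        fix i assume "i < length xs" "y = xs ! i" "h y = ys ! i" then show ?thesis using y ysA by simp
      qed
    qed
    fix p y assume y: "y \<in> X"
    from cases[OF y] show "U p y = U p (h y)"
    proof (elim disjE exE conjE)
      assume "y \<in> S" "h y = y" then show ?thesis by simp
    next
      fix i assume "i < length xs" "y = xs ! i" "h y = ys ! i" then show ?thesis using tU' by simp
    qed
  next
    fix r y z assume y: "y \<in> X" and z: "z \<in> X"
    from cases[OF y] cases[OF z] show "R r y z = R r (h y) (h z)"
    proof (elim disjE exE conjE)
      fix i j assume "y = xs ! i" "h y = ys ! i" "z = xs ! j" "h z = ys ! j" "i < length xs" "j < length xs"
      then show ?thesis using tR by simp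
    next
      fix i assume "y \<in> S" "h y = y" "z = xs ! i" "h z = ys ! i" "i < length xs"
      then show ?thesis using tS1 by simp
    next
      fix i assume "z \<in> S" "h z = z" "y = xs ! i" "h y = ys ! i" "i < length xs"
      then show ?thesis using tS2 by simp
    next
      assume "y \<in> S" "h y = y" "z \<in> S" "h z = z"
      then show ?thesis by simp
    qed
  next
    fix y z assume y: "y \<in> X" and z: "z \<in> X"
    from cases[OF y] cases[OF z] show "L y z = L (h y) (h z)"
    proof (elim disjE exE conjE)
      fix i j assume "y = xs ! i" "h y = ys ! i" "z = xs ! j" "h z = ys ! j" "i < length xs" "j < length xs"
      then show ?thesis using tL by simp
    next
      fix i assume "y \<in> S" "h y = y" "z = xs ! i" "h z = ys ! i" "i < length xs"
      then show ?thesis using tS3 by simp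
    next
      fix i assume "z \<in> S" "h z = z" "y = xs ! i" "h y = ys ! i" "i < length xs"
      then show ?thesis using tS4 by simp
    next
      assume "y \<in> S" "h y = y" "z \<in> S" "h z = z"
      then show ?thesis by simp
    qed
  qed
  moreover have "finite X" unfolding X_def using finS by simp
  moreover have "X \<subseteq> A" unfolding X_def using SA xA by simp
  ultimately obtain g where g: "g \<in> G" "\<forall>x\<in>X. g x = h x"
    using hom_fix[of X h S] hS unfolding X_def by blast
  have "map g xs = ys"
  proof (rule nth_equalityI)
    show "length (map g xs) = length ys" using len by simp
    fix i assume "i < length (map g xs)"
    then have i: "i < length xs" by simp
    then have "xs ! i \<in> X" unfolding X_def by simp
    then show "map g xs ! i = ys ! i" using g(2) hx[OF i] i by simp
  qed
  then show ?thesis using g(1) by blast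
qed

end

lemma mixJ_cong: "\<forall>i\<in>J. b ! i = b' ! i \<Longrightarrow> mixJ a b J = mixJ a b' J"
  unfolding mixJ_def by auto

context fl
begin

lemma twin_A: "twin D x x' \<Longrightarrow> x' \<in> A" unfolding twin_def by (elim conjE)
lemma twin_nD: "twin D x x' \<Longrightarrow> x' \<notin> D" unfolding twin_def by (elim conjE)
lemma twin_L: "twin D x x' \<Longrightarrow> L x x'" unfolding twin_def by (elim conjE)
lemma twin_nR1: "twin D x x' \<Longrightarrow> \<not> R r x x'"
  unfolding twin_def by (elim conjE) (drule spec[of _ r], elim conjE)
lemma twin_nR2: "twin D x x' \<Longrightarrow> \<not> R r x' x"
  unfolding twin_def by (elim conjE) (drule spec[of _ r], elim conjE)
lemma twin_U: "twin D x x' \<Longrightarrow> U p x' = U p x"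
  unfolding twin_def by (elim conjE) (drule spec[of _ p])
lemma twin_all: "twin D x x' \<Longrightarrow> y \<in> D \<Longrightarrow> y \<noteq> x \<Longrightarrow>
   (\<forall>r. (R r y x' = R r y x) \<and> (R r x' y = R r x y)) \<and> (L y x' = L y x) \<and> (L x' y = L x y)"
  unfolding twin_def by (elim conjE) (drule bspec, assumption, erule mp)
lemma twin_R1: "twin D x x' \<Longrightarrow> y \<in> D \<Longrightarrow> y \<noteq> x \<Longrightarrow> R r y x' = R r y x"
  using twin_all by blast
lemma twin_R2: "twin D x x' \<Longrightarrow> y \<in> D \<Longrightarrow> y \<noteq> x \<Longrightarrow> R r x' y = R r x y"
  using twin_all by blast
lemma twin_L1: "twin D x x' \<Longrightarrow> y \<in> D \<Longrightarrow> y \<noteq> x \<Longrightarrow> L y x' = L y x"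
  using twin_all by blast
lemma twin_L2: "twin D x x' \<Longrightarrow> y \<in> D \<Longrightarrow> y \<noteq> x \<Longrightarrow> L x' y = L x y"
  using twin_all by blast

lemma twin_aut:
  assumes tw: "twin D x x'" and D: "finite D" "D \<subseteq> A" "x \<in> D" "S \<subseteq> D" and xS: "x \<notin> S"
  shows "\<exists>g\<in>G. g x = x' \<and> (\<forall>y\<in>D. y \<noteq> x \<longrightarrow> g y = y)"
proof -
  define h where "h = (\<lambda>y. if y = x then x' else y)"
  have x'A: "x' \<in> A" using twin_A[OF tw] .
  have x'D: "x' \<notin> D" using twin_nD[OF tw] .
  have xA: "x \<in> A" using D by auto
  have hx: "h x = x'" unfolding h_def by simp
  have hy: "\<And>y. y \<noteq> x \<Longrightarrow> h y = y" unfolding h_def by simp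
  have "oemb D U R L A U R L h"
    unfolding oemb_def emb_def
  proof (intro conjI allI ballI)
    show "inj_on h D"
    proof (rule inj_onI)
      fix y z assume yz: "y \<in> D" "z \<in> D" "h y = h z"
      show "y = z"
      proof (cases "y = x")
        case True
        show ?thesis
        proof (rule ccontr)
          assume "y \<noteq> z"
          then have "z \<noteq> x" using True by simp
          then have "h z = z" using hy by simp
          then have "x' = z" using yz(3) True hx by simp
          then show False using x'D yz(2) by simp
        qed
      next
        case False
        then have hy': "h y = y" using hy by simp
        show ?thesis
        proof (cases "z = x")
          case True
          then have "x' = y" using yz(3) hx hy' by simp
          then show ?thesis using x'D yz(1) by simp
        next
          case False
          then show ?thesis using yz(3) hy' hy by simp
        qed
      qed
    qed
    show "h ` D \<subseteq> A" using D x'A unfolding h_def by auto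
    fix p y assume y: "y \<in> D"
    show "U p y = U p (h y)"
      using twin_U[OF tw] unfolding h_def by simp
  next
    fix r y z assume y: "y \<in> D" and z: "z \<in> D"
    show "R r y z = R r (h y) (h z)"
    proof (cases "y = x")
      case True
      show ?thesis
      proof (cases "z = x")
        case True
        then show ?thesis using \<open>y = x\<close> R_irrefl xA x'A hx by simp
      next
        case False
        then show ?thesis using \<open>y = x\<close> twin_R2[OF tw z False] hx hy by simp
      qed
    next
      case False
      show ?thesis
      proof (cases "z = x")
        case True
        then show ?thesis using False twin_R1[OF tw y False] hx hy by simp
      next
        case False
        then show ?thesis using \<open>y \<noteq> x\<close> hy by simp
      qed
    qed
  next
    fix y z assume y: "y \<in> D" and z: "z \<in> D"
    show "L y z = L (h y) (h z)"
    proof (cases "y = x")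
      case True
      show ?thesis
      proof (cases "z = x")
        case True
        then show ?thesis using \<open>y = x\<close> L_irrefl xA x'A hx by simp
      next
        case False
        then show ?thesis using \<open>y = x\<close> twin_L2[OF tw z False] hx hy by simp
      qed
    next
      case False
      show ?thesis
      proof (cases "z = x")
        case True
        then show ?thesis using False twin_L1[OF tw y False] hx hy by simp
      next
        case False
        then show ?thesis using \<open>y \<noteq> x\<close> hy by simp
      qed
    qed
  qed
  moreover have "\<forall>s\<in>S. h s = s"
  proof
    fix s assume "s \<in> S"
    then have "s \<noteq> x" using xS by blast
    then show "h s = s" by (rule hy)
  qed
  ultimately obtain g where g: "g \<in> G" "\<forall>y\<in>D. g y = h y" using hom_fix[OF D(1,2)] D(4) by blast
  have "g x = x'" using g(2) D(3) hx by simp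
  moreover have "\<forall>y\<in>D. y \<noteq> x \<longrightarrow> g y = y" using g(2) hy by simp
  ultimately show ?thesis using g(1) by blast
qed

definition colex :: "nat \<Rightarrow> 'a list \<Rightarrow> 'a list \<Rightarrow> bool" where
  "colex k y m \<longleftrightarrow> (\<forall>i<k. (\<forall>j. i < j \<and> j < k \<longrightarrow> y ! j = m ! j) \<longrightarrow> (y ! i = m ! i \<or> L (y ! i) (m ! i)))"

lemma colex_down: "colex (Suc k) y m \<Longrightarrow> y ! k = m ! k \<Longrightarrow> colex k y m"
  unfolding colex_def
proof (intro allI impI)
  fix i assume H: "\<forall>i<Suc k. (\<forall>j. i < j \<and> j < Suc k \<longrightarrow> y ! j = m ! j) \<longrightarrow> y ! i = m ! i \<or> L (y ! i) (m ! i)"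
    and e: "y ! k = m ! k" and i: "i < k" and ag: "\<forall>j. i < j \<and> j < k \<longrightarrow> y ! j = m ! j"
  have "\<forall>j. i < j \<and> j < Suc k \<longrightarrow> y ! j = m ! j"
  proof (intro allI impI)
    fix j assume "i < j \<and> j < Suc k"
    then show "y ! j = m ! j" using ag e by (cases "j = k") auto
  qed
  then show "y ! i = m ! i \<or> L (y ! i) (m ! i)" using H i by simp
qed

lemma colex_cong: "\<forall>i<k. y ! i = z ! i \<Longrightarrow> colex k z m \<Longrightarrow> colex k y m"
  unfolding colex_def by simp

lemma max_L: "finite X \<Longrightarrow> X \<noteq> {} \<Longrightarrow> X \<subseteq> A \<Longrightarrow> \<exists>M\<in>X. \<forall>x\<in>X. x = M \<or> L x M"
proof (induction X rule: finite_ne_induct)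
  case (singleton x) then show ?case by simp
next
  case (insert x F)
  obtain M where M: "M \<in> F" "\<forall>y\<in>F. y = M \<or> L y M" using insert by auto
  have xA: "x \<in> A" and MA: "M \<in> A" using insert M by auto
  show ?case
  proof (cases "x = M \<or> L x M")
    case True then show ?thesis using M by auto
  next
    case False
    then have "L M x" using L_total[OF xA MA] by auto
    have "\<forall>y\<in>insert x F. y = x \<or> L y x"
    proof
      fix y assume "y \<in> insert x F"
      then consider "y = x" | "y = M" | "y \<in> F" "L y M" using M by auto
      then show "y = x \<or> L y x"
      proof cases
        case 3 then have "y \<in> A" using insert by auto
        then show ?thesis using L_trans[OF _ MA xA] 3 \<open>L M x\<close> by blast
      qed (use \<open>L M x\<close> in auto)
    qed
    then show ?thesis by blast
  qed
qed

lemma colex_max: "k \<le> n \<Longrightarrow> finite P \<Longrightarrow> P \<noteq> {} \<Longrightarrow> P \<subseteq> Orb \<Longrightarrow> \<exists>m\<in>P. \<forall>y\<in>P. colex k y m"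
proof (induction k arbitrary: P)
  case 0 then show ?case unfolding colex_def by auto
next
  case (Suc k)
  define X where "X = (\<lambda>y. y ! k) ` P"
  have "X \<subseteq> A" unfolding X_def using Suc.prems orb_A by auto
  moreover have "finite X" "X \<noteq> {}" unfolding X_def using Suc.prems by auto
  ultimately obtain M where M: "M \<in> X" "\<forall>x\<in>X. x = M \<or> L x M" using max_L by blast
  define P' where "P' = {y\<in>P. y ! k = M}"
  have "P' \<noteq> {}" using M(1) unfolding X_def P'_def by auto
  moreover have "finite P'" "P' \<subseteq> Orb" using Suc.prems unfolding P'_def by auto
  moreover have "k \<le> n" using Suc.prems(1) by simp
  ultimately obtain m where m: "m \<in> P'" "\<forall>y\<in>P'. colex k y m" using Suc.IH by blast
  have mk: "m ! k = M" "m \<in> P" using m(1) unfolding P'_def by auto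
  have "\<forall>y\<in>P. colex (Suc k) y m"
    unfolding colex_def
  proof (intro ballI allI impI)
    fix y i assume y: "y \<in> P" and i: "i < Suc k" and ag: "\<forall>j. i < j \<and> j < Suc k \<longrightarrow> y ! j = m ! j"
    show "y ! i = m ! i \<or> L (y ! i) (m ! i)"
    proof (cases "i = k")
      case True
      have "y ! k \<in> X" unfolding X_def using y by simp
      then show ?thesis using M(2) mk True by auto
    next
      case False
      then have ik: "i < k" using i by simp
      then have "y ! k = M" using ag mk by auto
      then have "y \<in> P'" unfolding P'_def using y by simp
      then have "colex k y m" using m(2) by simp
      moreover have "\<forall>j. i < j \<and> j < k \<longrightarrow> y ! j = m ! j" using ag by simp
      ultimately show ?thesis using ik unfolding colex_def by simp
    qed
  qed
  then show ?case using mk(2) by blast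
qed

lemma linD1: "w \<in> Lin Orb \<Longrightarrow> w y \<noteq> 0 \<Longrightarrow> y \<in> Orb" unfolding Lin_def by blast
lemma linD2: "w \<in> Lin Orb \<Longrightarrow> finite {y. w y \<noteq> 0}" unfolding Lin_def by blast

end

context fl
begin

context
  fixes V :: "('a list \<Rightarrow> 'k::field) set" and v :: "'a list \<Rightarrow> 'k" and m :: "'a list" and c :: 'k
  assumes sub: "subspace_of V (Lin Orb)" and inv: "invariant G V" and vV: "v \<in> V"
    and mP: "v m \<noteq> 0" and mmax: "\<forall>y. v y \<noteq> 0 \<longrightarrow> colex n y m" and cdef: "c = v m"
begin

definition Inv :: "nat \<Rightarrow> ('a list \<Rightarrow> 'k) \<Rightarrow> 'a list \<Rightarrow> bool" where
  "Inv k w m' \<longleftrightarrow> w \<in> V \<and> length m' = n \<and>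
    (\<forall>y. w y \<noteq> 0 \<longrightarrow> (\<forall>j. k \<le> j \<and> j < n \<longrightarrow> y ! j = m ! j \<or> y ! j = m' ! j) \<and> colex k y m) \<and>
    (\<forall>J. J \<subseteq> {k..<n} \<longrightarrow> w (mixJ m m' J) = c * (-1) ^ card J) \<and>
    (\<forall>j. k \<le> j \<and> j < n \<longrightarrow> twin (S \<union> set m \<union> (\<lambda>i. m' ! i) ` {j<..<n}) (m ! j) (m' ! j))"

lemma VLin: "w \<in> V \<Longrightarrow> w \<in> Lin Orb" using sub unfolding subspace_of_def by blast
lemma Vadd: "w \<in> V \<Longrightarrow> u \<in> V \<Longrightarrow> (\<lambda>x. w x + u x) \<in> V" using sub unfolding subspace_of_def by blast
lemma Vsc: "w \<in> V \<Longrightarrow> (\<lambda>x. a * w x) \<in> V" using sub unfolding subspace_of_def by blast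
lemma Vact: "w \<in> V \<Longrightarrow> g \<in> G \<Longrightarrow> act g w \<in> V" using inv unfolding invariant_def by blast

lemma mO: "m \<in> Orb" using linD1[OF VLin[OF vV] mP] .
lemma lm: "length m = n" using orb_len[OF mO] .
lemma c0: "c \<noteq> 0" using mP cdef by simp

lemma Inv_base: "Inv n v m"
  unfolding Inv_def
proof (intro conjI allI impI)
  show "v \<in> V" by (rule vV)
  show "length m = n" by (rule lm)
  fix y assume "v y \<noteq> 0"
  then show "colex n y m" using mmax by blast
next
  fix y j assume "n \<le> j \<and> j < n" then show "y ! j = m ! j \<or> y ! j = m ! j" by auto
next
  fix J assume "J \<subseteq> {n..<n}"
  then have "J = {}" by auto
  moreover have "mixJ m m {} = m" by (rule mixJ_empty)
  ultimately show "v (mixJ m m J) = c * (-1) ^ card J" using cdef by simp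
next
  fix j assume "n \<le> j \<and> j < n"
  then show "twin (S \<union> set m \<union> (\<lambda>i. m ! i) ` {j<..<n}) (m ! j) (m ! j)" by auto
qed

lemma Inv_step:
  assumes k: "k < n" and I: "Inv (Suc k) w m'"
  shows "\<exists>w' m''. Inv k w' m''"
proof -
  have wV: "w \<in> V" using I unfolding Inv_def by blast
  have lm': "length m' = n" using I unfolding Inv_def by blast
  have sp: "\<And>y j. w y \<noteq> 0 \<Longrightarrow> Suc k \<le> j \<Longrightarrow> j < n \<Longrightarrow> y ! j = m ! j \<or> y ! j = m' ! j"
    using I unfolding Inv_def by blast
  have cx: "\<And>y. w y \<noteq> 0 \<Longrightarrow> colex (Suc k) y m" using I unfolding Inv_def by blast
  have pv: "\<And>J. J \<subseteq> {Suc k..<n} \<Longrightarrow> w (mixJ m m' J) = c * (-1) ^ card J"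
    using I unfolding Inv_def by blast
  have tw: "\<And>j. Suc k \<le> j \<Longrightarrow> j < n \<Longrightarrow> twin (S \<union> set m \<union> (\<lambda>i. m' ! i) ` {j<..<n}) (m ! j) (m' ! j)"
    using I unfolding Inv_def by blast
  have mA: "\<And>i. i < n \<Longrightarrow> m ! i \<in> A" using orb_A[OF mO] .
  have mdist: "distinct m" using orb_distinct[OF mO] .
  have wLin: "w \<in> Lin Orb" using VLin[OF wV] .
  have wO: "\<And>y. w y \<noteq> 0 \<Longrightarrow> y \<in> Orb" using linD1[OF wLin] .
  have wfin: "finite {y. w y \<noteq> 0}" using linD2[OF wLin] .
  have m'A: "\<And>j. Suc k \<le> j \<Longrightarrow> j < n \<Longrightarrow> m' ! j \<in> A" using tw twin_A by blast
  define D where "D = S \<union> \<Union> (set ` {y. w y \<noteq> 0}) \<union> set m \<union> (\<lambda>i. m' ! i) ` {Suc k..<n}"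
  have Dfin: "finite D" unfolding D_def using finS wfin by simp
  have DA: "D \<subseteq> A"
  proof -
    have "\<Union> (set ` {y. w y \<noteq> 0}) \<subseteq> A" using wO orb_setA by blast
    moreover have "set m \<subseteq> A" using orb_setA[OF mO] .
    moreover have "(\<lambda>i. m' ! i) ` {Suc k..<n} \<subseteq> A" using m'A by auto
    ultimately show ?thesis unfolding D_def using SA by blast
  qed
  have xD: "m ! k \<in> D" unfolding D_def using k lm by simp
  have SD: "S \<subseteq> D" unfolding D_def by blast
  have xS: "m ! k \<notin> S" using orb_S[OF mO k] .
  have suppD: "\<And>y. w y \<noteq> 0 \<Longrightarrow> set y \<subseteq> D" unfolding D_def by blast
  obtain x' where tx: "twin D (m ! k) x'" using twin_exists[OF Dfin DA xD] by blast
  obtain g where g: "g \<in> G" "g (m ! k) = x'" "\<forall>y\<in>D. y \<noteq> m ! k \<longrightarrow> g y = y"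
    using twin_aut[OF tx Dfin DA xD SD xS] by blast
  have gfix: "\<And>y. y \<in> D \<Longrightarrow> y \<noteq> m ! k \<Longrightarrow> g y = y" using g(3) by blast
  have x'A: "x' \<in> A" using twin_A[OF tx] .
  have x'D: "x' \<notin> D" using twin_nD[OF tx] .
  have x'ne: "x' \<noteq> m ! k" using x'D xD by blast
  define m'' where "m'' = m'[k := x']"
  define w' where "w' = (\<lambda>y. w y + (-1) * act g w y)"
  have w'V: "w' \<in> V" unfolding w'_def using Vadd[OF wV Vsc[OF Vact[OF wV g(1)]]] .
  have ylen: "\<And>y. w y \<noteq> 0 \<Longrightarrow> length y = n" using wO orb_len by blast
  have F2: "\<And>y. w y \<noteq> 0 \<Longrightarrow> m ! k \<in> set y \<Longrightarrow> y ! k = m ! k"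
  proof -
    fix y assume wy: "w y \<noteq> 0" and mem: "m ! k \<in> set y"
    have yO: "y \<in> Orb" using wO[OF wy] .
    obtain i where i: "i < n" "y ! i = m ! k" using mem ylen[OF wy] by (metis in_set_conv_nth)
    have "i = k"
    proof (rule ccontr)
      assume "i \<noteq> k"
      then consider "k < i" | "i < k" by linarith
      then show False
      proof cases
        case 1
        then have "Suc k \<le> i" by simp
        then have "y ! i = m ! i \<or> y ! i = m' ! i" using sp[OF wy _ i(1)] by blast
        then show False
        proof
          assume "y ! i = m ! i"
          then have "m ! i = m ! k" using i by simp
          then show False using mdist lm i(1) k \<open>i \<noteq> k\<close> nth_eq_iff_index_eq by metis
        next
          assume "y ! i = m' ! i"
          then have "m' ! i = m ! k" using i by simp
          moreover have "m' ! i \<notin> S \<union> set m \<union> (\<lambda>j. m' ! j) ` {i<..<n}" using twin_nD[OF tw] 1 i(1) by simp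
          ultimately show False using k lm by simp
        qed
      next
        case 2
        have Lik: "L (y ! i) (y ! k)" using orb_L[OF yO i(1) k] 2 by simp
        have vac: "\<forall>j. k < j \<and> j < Suc k \<longrightarrow> y ! j = m ! j" by auto
        have "y ! k = m ! k \<or> L (y ! k) (m ! k)" using cx[OF wy] vac unfolding colex_def by blast
        then show False
        proof
          assume "y ! k = m ! k"
          then show False using Lik i(2) L_irrefl mA k by simp
        next
          assume "L (y ! k) (m ! k)"
          then show False using Lik i(2) L_asym orb_A[OF yO k] mA[OF k] by simp
        qed
      qed
    qed
    then show "y ! k = m ! k" using i by simp
  qed
  have F3: "\<And>y. w y \<noteq> 0 \<Longrightarrow> map g y = (if y ! k = m ! k then y[k := x'] else y)"
  proof -
    fix y assume wy: "w y \<noteq> 0"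
    have yD: "set y \<subseteq> D" using suppD[OF wy] .
    have ydist: "distinct y" using orb_distinct[OF wO[OF wy]] .
    show "map g y = (if y ! k = m ! k then y[k := x'] else y)"
    proof (cases "y ! k = m ! k")
      case True
      have "map g y = y[k := x']"
      proof (rule nth_equalityI)
        show "length (map g y) = length (y[k := x'])" by simp
        fix i assume "i < length (map g y)"
        then have i: "i < length y" by simp
        show "map g y ! i = y[k := x'] ! i"
        proof (cases "i = k")
          case True
          then show ?thesis using i \<open>y ! k = m ! k\<close> g(2) by simp
        next
          case False
          have "y ! i \<noteq> y ! k" using ydist i False k ylen[OF wy] nth_eq_iff_index_eq by metis
          moreover have "y ! i \<in> D" using yD i by (meson nth_mem subsetD)
          ultimately have "g (y ! i) = y ! i" using gfix \<open>y ! k = m ! k\<close> by simp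
          then show ?thesis using i False by simp
        qed
      qed
      then show ?thesis using True by simp
    next
      case False
      then have nm: "m ! k \<notin> set y" using F2[OF wy] by blast
      have "map g y = y"
      proof (rule nth_equalityI)
        show "length (map g y) = length y" by simp
        fix i assume "i < length (map g y)"
        then have i: "i < length y" by simp
        have "y ! i \<noteq> m ! k" using nm i by (metis nth_mem)
        moreover have "y ! i \<in> D" using yD i by (meson nth_mem subsetD)
        ultimately have "g (y ! i) = y ! i" using gfix by simp
        then show "map g y ! i = y ! i" using i by simp
      qed
      then show ?thesis using False by simp
    qed
  qed
  have suppA: "\<forall>y. w y \<noteq> 0 \<longrightarrow> set y \<subseteq> A" using wO orb_setA by blast
  have gi: "inj_on g A" using aut_inj[OF g(1)] .
  have actm: "\<And>z. set z \<subseteq> A \<Longrightarrow> act g w (map g z) = w z" using act_map[OF gi suppA] .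
  have V1: "\<And>y. w y \<noteq> 0 \<Longrightarrow> y ! k \<noteq> m ! k \<Longrightarrow> w' y = 0"
  proof -
    fix y assume wy: "w y \<noteq> 0" and yk: "y ! k \<noteq> m ! k"
    have "map g y = y" using F3[OF wy] yk by simp
    then have "act g w y = w y" using actm[OF orb_setA[OF wO[OF wy]]] by simp
    then show "w' y = 0" unfolding w'_def by simp
  qed
  have V2: "\<And>y. w y \<noteq> 0 \<Longrightarrow> y ! k = m ! k \<Longrightarrow> w' y = w y"
  proof -
    fix y assume wy: "w y \<noteq> 0" and yk: "y ! k = m ! k"
    have "\<forall>z. w z \<noteq> 0 \<longrightarrow> map g z \<noteq> y"
    proof (intro allI impI)
      fix z assume wz: "w z \<noteq> 0"
      show "map g z \<noteq> y"
      proof (cases "z ! k = m ! k")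
        case True
        then have "map g z = z[k := x']" using F3[OF wz] by simp
        then have "map g z ! k = x'" using k ylen[OF wz] by simp
        then show ?thesis using yk x'ne by auto
      next
        case False
        then have "map g z = z" using F3[OF wz] by simp
        then show ?thesis using yk False by auto
      qed
    qed
    then have "act g w y = 0" by (rule act_zero)
    then show "w' y = w y" unfolding w'_def by simp
  qed
  have V3: "\<And>z. w z \<noteq> 0 \<Longrightarrow> z ! k = m ! k \<Longrightarrow> w' (z[k := x']) = - w z"
  proof -
    fix z assume wz: "w z \<noteq> 0" and zk: "z ! k = m ! k"
    have "x' \<in> set (z[k := x'])" using k ylen[OF wz] by (simp add: set_update_memI)
    then have "\<not> set (z[k := x']) \<subseteq> D" using x'D by blast
    then have w0: "w (z[k := x']) = 0" using suppD by blast
    have "map g z = z[k := x']" using F3[OF wz] zk by simp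
    then have "act g w (z[k := x']) = w z" using actm[OF orb_setA[OF wO[OF wz]]] by simp
    then show "w' (z[k := x']) = - w z" unfolding w'_def using w0 by simp
  qed
  have V4: "\<And>y. w y = 0 \<Longrightarrow> w' y \<noteq> 0 \<Longrightarrow> \<exists>z. w z \<noteq> 0 \<and> z ! k = m ! k \<and> y = z[k := x']"
  proof -
    fix y assume wy: "w y = 0" and w'y: "w' y \<noteq> 0"
    then have "act g w y \<noteq> 0" unfolding w'_def by auto
    then obtain z where wz: "w z \<noteq> 0" and zy: "map g z = y" using act_zero by blast
    show "\<exists>z. w z \<noteq> 0 \<and> z ! k = m ! k \<and> y = z[k := x']"
    proof (cases "z ! k = m ! k")
      case True
      then show ?thesis using F3[OF wz] zy wz by auto
    next
      case False
      then have "y = z" using F3[OF wz] zy by simp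
      then show ?thesis using wy wz by simp
    qed
  qed
  have lm'': "length m'' = n" unfolding m''_def using lm' by simp
  have m''k: "m'' ! k = x'" unfolding m''_def using lm' k by simp
  have m''o: "\<And>i. i \<noteq> k \<Longrightarrow> m'' ! i = m' ! i" unfolding m''_def by simp
  have "Inv k w' m''"
    unfolding Inv_def
  proof (intro conjI)
    show "w' \<in> V" by (rule w'V)
    show "length m'' = n" by (rule lm'')
  next
    show "\<forall>y. w' y \<noteq> 0 \<longrightarrow> (\<forall>j. k \<le> j \<and> j < n \<longrightarrow> y ! j = m ! j \<or> y ! j = m'' ! j) \<and> colex k y m"
    proof (intro allI impI)
    fix y assume w'y: "w' y \<noteq> 0"
    show "(\<forall>j. k \<le> j \<and> j < n \<longrightarrow> y ! j = m ! j \<or> y ! j = m'' ! j) \<and> colex k y m"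
    proof (cases "w y = 0")
      case False
      then have yk: "y ! k = m ! k" using V1 w'y by blast
      have "\<forall>j. k \<le> j \<and> j < n \<longrightarrow> y ! j = m ! j \<or> y ! j = m'' ! j"
      proof (intro allI impI)
        fix j assume j: "k \<le> j \<and> j < n"
        show "y ! j = m ! j \<or> y ! j = m'' ! j"
        proof (cases "j = k")
          case True then show ?thesis using yk by simp
        next
          case False
          then show ?thesis using sp[OF \<open>w y \<noteq> 0\<close>, of j] j m''o by simp
        qed
      qed
      moreover have "colex k y m" using colex_down[OF cx[OF False] yk] .
      ultimately show ?thesis by blast
    next
      case True
      obtain z where z: "w z \<noteq> 0" "z ! k = m ! k" "y = z[k := x']" using V4[OF True w'y] by blast
      have lz: "length z = n" using ylen[OF z(1)] .
      have "\<forall>j. k \<le> j \<and> j < n \<longrightarrow> y ! j = m ! j \<or> y ! j = m'' ! j"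
      proof (intro allI impI)
        fix j assume j: "k \<le> j \<and> j < n"
        show "y ! j = m ! j \<or> y ! j = m'' ! j"
        proof (cases "j = k")
          case True then show ?thesis using z(3) lz k m''k by simp
        next
          case False
          then show ?thesis using sp[OF z(1), of j] j m''o z(3) by simp
        qed
      qed
      moreover have "colex k y m"
      proof (rule colex_cong)
        show "\<forall>i<k. y ! i = z ! i" using z(3) by simp
        show "colex k z m" using colex_down[OF cx[OF z(1)] z(2)] .
      qed
      ultimately show ?thesis by blast
    qed
    qed
  next
    show "\<forall>J. J \<subseteq> {k..<n} \<longrightarrow> w' (mixJ m m'' J) = c * (-1) ^ card J"
    proof (intro allI impI)
    fix J assume J: "J \<subseteq> {k..<n}"
    show "w' (mixJ m m'' J) = c * (-1) ^ card J"
    proof (cases "k \<in> J")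
      case False
      then have J': "J \<subseteq> {Suc k..<n}" using J by (auto simp: Suc_le_eq order_le_less)
      have "\<forall>i\<in>J. m'' ! i = m' ! i"
      proof
        fix i assume "i \<in> J"
        then have "i \<noteq> k" using False by blast
        then show "m'' ! i = m' ! i" by (rule m''o)
      qed
      then have eq: "mixJ m m'' J = mixJ m m' J" by (rule mixJ_cong)
      have wne: "w (mixJ m m' J) \<noteq> 0" using pv[OF J'] c0 by simp
      have "mixJ m m' J ! k = m ! k" using mixJ_nth[of k m m' J] k lm False by simp
      then have "w' (mixJ m m' J) = w (mixJ m m' J)" using V2[OF wne] by simp
      then show ?thesis using eq pv[OF J'] by simp
    next
      case True
      define J0 where "J0 = J - {k}"
      have J0: "J0 \<subseteq> {Suc k..<n}" using J unfolding J0_def by (auto simp: Suc_le_eq order_le_less)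
      have finJ: "finite J" using J finite_subset by blast
      have cardJ: "card J = Suc (card J0)" unfolding J0_def using card_Suc_Diff1[OF finJ True] by simp
      define z where "z = mixJ m m' J0"
      have wz: "w z = c * (-1) ^ card J0" unfolding z_def using pv[OF J0] .
      then have wz0: "w z \<noteq> 0" using c0 by simp
      have zk: "z ! k = m ! k" unfolding z_def using mixJ_nth[of k m m' J0] k lm unfolding J0_def by simp
      have "z[k := x'] = mixJ m m'' J"
      proof (rule nth_equalityI)
        show "length (z[k := x']) = length (mixJ m m'' J)" unfolding z_def by simp
        fix i assume "i < length (z[k := x'])"
        then have i: "i < length m" unfolding z_def by simp
        show "z[k := x'] ! i = mixJ m m'' J ! i"
        proof (cases "i = k")
          case True then show ?thesis using i True \<open>k \<in> J\<close> m''k unfolding z_def by (simp add: mixJ_nth)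
        next
          case False then show ?thesis using i m''o unfolding z_def J0_def by (simp add: mixJ_nth)
        qed
      qed
      then have "w' (mixJ m m'' J) = - w z" using V3[OF wz0 zk] by simp
      then show ?thesis using wz cardJ by simp
    qed
    qed
  next
    show "\<forall>j. k \<le> j \<and> j < n \<longrightarrow> twin (S \<union> set m \<union> (\<lambda>i. m'' ! i) ` {j<..<n}) (m ! j) (m'' ! j)"
    proof (intro allI impI)
    fix j assume j: "k \<le> j \<and> j < n"
    show "twin (S \<union> set m \<union> (\<lambda>i. m'' ! i) ` {j<..<n}) (m ! j) (m'' ! j)"
    proof (cases "j = k")
      case True
      have "(\<lambda>i. m'' ! i) ` {k<..<n} \<subseteq> (\<lambda>i. m' ! i) ` {Suc k..<n}"
      proof
        fix u assume "u \<in> (\<lambda>i. m'' ! i) ` {k<..<n}"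
        then obtain i where "i \<in> {k<..<n}" "u = m'' ! i" by blast
        then show "u \<in> (\<lambda>i. m' ! i) ` {Suc k..<n}" using m''o by auto
      qed
      then have "S \<union> set m \<union> (\<lambda>i. m'' ! i) ` {k<..<n} \<subseteq> D" unfolding D_def by blast
      then show ?thesis using twin_mono[OF tx] True m''k by simp
    next
      case False
      then have j': "Suc k \<le> j" "j < n" using j by auto
      have "(\<lambda>i. m'' ! i) ` {j<..<n} = (\<lambda>i. m' ! i) ` {j<..<n}"
        using m''o j' by (intro image_cong) auto
      then show ?thesis using tw[OF j'] m''o False by simp
    qed
    qed
  qed
  then show ?thesis by blast
qed

lemma Inv_all: "d \<le> n \<Longrightarrow> \<exists>w m'. Inv (n - d) w m'"
proof (induction d)
  case 0 then show ?case using Inv_base by auto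
next
  case (Suc d)
  then obtain w m' where "Inv (n - d) w m'" by auto
  moreover have "n - d = Suc (n - Suc d)" using Suc.prems by simp
  ultimately have "Inv (Suc (n - Suc d)) w m'" by simp
  moreover have "n - Suc d < n" using Suc.prems by simp
  ultimately show ?case using Inv_step by blast
qed

end
end

context fl
begin

context
  fixes V :: "('a list \<Rightarrow> 'k::field) set" and v :: "'a list \<Rightarrow> 'k" and m :: "'a list" and c :: 'k
  assumes sub: "subspace_of V (Lin Orb)" and inv: "invariant G V" and vV: "v \<in> V"
    and mP: "v m \<noteq> 0" and mmax: "\<forall>y. v y \<noteq> 0 \<longrightarrow> colex n y m" and cdef: "c = v m"
begin

lemma Inv_final:
  assumes I: "Inv V m c 0 w m'"
  shows "duo R L Orb m m' \<and> cog m m' \<in> V"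
proof -
  note ctx = sub inv vV mP mmax cdef
  have wV: "w \<in> V" using I unfolding Inv_def[OF ctx] by blast
  have lm': "length m' = n" using I unfolding Inv_def[OF ctx] by blast
  have sp: "\<And>y j. w y \<noteq> 0 \<Longrightarrow> j < n \<Longrightarrow> y ! j = m ! j \<or> y ! j = m' ! j"
    using I unfolding Inv_def[OF ctx] by blast
  have pv: "\<And>J. J \<subseteq> {0..<n} \<Longrightarrow> w (mixJ m m' J) = c * (-1) ^ card J"
    using I unfolding Inv_def[OF ctx] by blast
  have tw: "\<And>j. j < n \<Longrightarrow> twin (S \<union> set m \<union> (\<lambda>i. m' ! i) ` {j<..<n}) (m ! j) (m' ! j)"
    using I unfolding Inv_def[OF ctx] by blast
  have mO: "m \<in> Orb" using mO[OF ctx] .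
  have lm: "length m = n" using orb_len[OF mO] .
  have c0: "c \<noteq> 0" using mP cdef by simp
  have mA: "\<And>i. i < n \<Longrightarrow> m ! i \<in> A" using orb_A[OF mO] .
  have mdist: "distinct m" using orb_distinct[OF mO] .
  have wLin: "w \<in> Lin Orb" using VLin[OF ctx wV] .
  have wO: "\<And>y. w y \<noteq> 0 \<Longrightarrow> y \<in> Orb" using linD1[OF wLin] .
  have m'A: "\<And>j. j < n \<Longrightarrow> m' ! j \<in> A" using tw twin_A by blast
  have mmix: "mixJ m m' {..<n} = m'"
    by (rule nth_equalityI) (simp_all add: lm lm' mixJ_nth)
  have "w m' = c * (-1) ^ n" using pv[of "{..<n}"] mmix by (simp add: lessThan_atLeast0)
  then have m'O: "m' \<in> Orb" using wO c0 by simp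
  have inD: "\<And>i j. i < n \<Longrightarrow> j < n \<Longrightarrow> m ! j \<in> S \<union> set m \<union> (\<lambda>i. m' ! i) ` {i<..<n}"
    using lm by simp
  have inD2: "\<And>i j. i < j \<Longrightarrow> j < n \<Longrightarrow> m' ! j \<in> S \<union> set m \<union> (\<lambda>i. m' ! i) ` {i<..<n}"
    by simp
  have mne: "\<And>i j. i < n \<Longrightarrow> j < n \<Longrightarrow> i \<noteq> j \<Longrightarrow> m ! j \<noteq> m ! i"
    using mdist lm nth_eq_iff_index_eq by metis
  have m'ne: "\<And>i j. i < j \<Longrightarrow> j < n \<Longrightarrow> m' ! j \<noteq> m ! i"
  proof
    fix i j assume ij: "i < j" "j < n" "m' ! j = m ! i"
    have "m' ! j \<notin> S \<union> set m \<union> (\<lambda>i. m' ! i) ` {j<..<n}" using twin_nD[OF tw[OF ij(2)]] .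
    then show False using ij lm by simp
  qed
  have m'ne2: "\<And>i j. i < n \<Longrightarrow> j < n \<Longrightarrow> m' ! j \<noteq> m ! i"
  proof
    fix i j assume ij: "i < n" "j < n" "m' ! j = m ! i"
    have "m' ! j \<notin> S \<union> set m \<union> (\<lambda>i. m' ! i) ` {j<..<n}" using twin_nD[OF tw[OF ij(2)]] .
    then show False using ij lm by simp
  qed
  have RT1: "\<And>r i j. i < n \<Longrightarrow> j < n \<Longrightarrow> R r (m ! i) (m' ! j) = R r (m ! i) (m ! j)"
  proof -
    fix r i j assume ij: "i < n" "j < n"
    show "R r (m ! i) (m' ! j) = R r (m ! i) (m ! j)"
    proof (cases "i = j")
      case True then show ?thesis using twin_nR1[OF tw[OF ij(2)]] R_irrefl[OF mA[OF ij(1)]] by simp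
    next
      case False then show ?thesis using twin_R1[OF tw[OF ij(2)] inD[OF ij(2,1)] mne[OF ij(2,1) not_sym[OF False]]] by simp
    qed
  qed
  have RT2: "\<And>r i j. i < n \<Longrightarrow> j < n \<Longrightarrow> R r (m' ! i) (m ! j) = R r (m ! i) (m ! j)"
  proof -
    fix r i j assume ij: "i < n" "j < n"
    show "R r (m' ! i) (m ! j) = R r (m ! i) (m ! j)"
    proof (cases "i = j")
      case True then show ?thesis using twin_nR2[OF tw[OF ij(1)]] R_irrefl[OF mA[OF ij(1)]] by simp
    next
      case False
      have "m ! j \<noteq> m ! i" using mne[OF ij(1,2)] False by blast
      then show ?thesis using twin_R2[OF tw[OF ij(1)] inD[OF ij(1,2)]] by simp
    qed
  qed
  have RT3: "\<And>r i j. i < n \<Longrightarrow> j < n \<Longrightarrow> R r (m' ! i) (m' ! j) = R r (m ! i) (m ! j)"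
  proof -
    fix r i j assume ij: "i < n" "j < n"
    consider "i = j" | "i < j" | "j < i" by linarith
    then show "R r (m' ! i) (m' ! j) = R r (m ! i) (m ! j)"
    proof cases
      case 1 then show ?thesis using R_irrefl[OF mA[OF ij(1)]] R_irrefl[OF m'A[OF ij(1)]] by simp
    next
      case 2
      have "R r (m' ! i) (m' ! j) = R r (m ! i) (m' ! j)"
        using twin_R2[OF tw[OF ij(1)] inD2[OF 2 ij(2)] m'ne[OF 2 ij(2)]] .
      then show ?thesis using RT1[OF ij] by simp
    next
      case 3
      have "R r (m' ! i) (m' ! j) = R r (m' ! i) (m ! j)"
        using twin_R1[OF tw[OF ij(2)] inD2[OF 3 ij(1)] m'ne[OF 3 ij(1)]] .
      then show ?thesis using RT2[OF ij] by simp
    qed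
  qed
  have "duo R L Orb m m'"
    unfolding duo_def
  proof (intro conjI allI impI)
    show "m \<in> Orb" by (rule mO)
    show "m' \<in> Orb" by (rule m'O)
    fix i assume i: "i < length m"
    then show "L (m ! i) (m' ! i)" using twin_L[OF tw] lm by simp
  next
    fix i j assume ij: "i < length m" "j < length m" "i < j"
    have "m ! j \<noteq> m ! i" using mne ij lm by simp
    then have "L (m' ! i) (m ! j) = L (m ! i) (m ! j)" using twin_L2[OF tw inD] ij lm by simp
    then show "L (m' ! i) (m ! j)" using orb_L[OF mO] ij lm by simp
  next
    fix r i j assume ij: "i < length m" "j < length m"
    show "R r (m ! i) (m' ! j) = R r (m ! i) (m ! j)" using RT1 ij lm by simp
    show "R r (m ! i) (m ! j) = R r (m' ! i) (m' ! j)" using RT3 ij lm by simp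
    show "R r (m' ! i) (m' ! j) = R r (m' ! i) (m ! j)" using RT3 RT2 ij lm by simp
  qed
  moreover have "cog m m' \<in> V"
  proof -
    have ne: "\<forall>i<length m. m ! i \<noteq> m' ! i" using m'ne2 lm by metis
    have "\<And>y. w y = c * cog m m' y"
    proof -
      fix y
      show "w y = c * cog m m' y"
      proof (cases "w y = 0")
        case False
        have yO: "y \<in> Orb" using wO[OF False] .
        define J where "J = {j. j < n \<and> y ! j \<noteq> m ! j}"
        have J: "J \<subseteq> {..<length m}" unfolding J_def using lm by auto
        have "y = mixJ m m' J"
        proof (rule nth_equalityI)
          show "length y = length (mixJ m m' J)" using orb_len[OF yO] lm by simp
          fix i assume "i < length y"
          then have i: "i < n" using orb_len[OF yO] by simp
          then show "y ! i = mixJ m m' J ! i" using sp[OF False i] lm unfolding J_def by (auto simp: mixJ_nth)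
        qed
        moreover have "w (mixJ m m' J) = c * (-1) ^ card J" using pv J lm by (simp add: lessThan_atLeast0)
        moreover have "cog m m' (mixJ m m' J) = (-1) ^ card J" using cog_at[OF ne J] .
        ultimately show ?thesis by metis
      next
        case True
        have "y \<notin> mixJ m m' ` Pow {..<length m}"
        proof
          assume "y \<in> mixJ m m' ` Pow {..<length m}"
          then obtain J where J: "J \<subseteq> {..<length m}" "y = mixJ m m' J" by blast
          then have "w y = c * (-1) ^ card J" using pv lm by (simp add: lessThan_atLeast0)
          then show False using True c0 by simp
        qed
        then have "cog m m' y = (0::'k)" by (rule cog_off)
        then show ?thesis using True by simp
      qed
    qed
    then have "cog m m' = (\<lambda>y. inverse c * w y)" using c0 by (auto simp: field_simps)
    then show ?thesis using Vsc[OF ctx wV] by simp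
  qed
  ultimately show ?thesis by blast
qed

end

lemma process:
  fixes V :: "('a list \<Rightarrow> 'k::field) set"
  assumes sub: "subspace_of V (Lin Orb)" and inv: "invariant G V" and vV: "v \<in> V" and v0: "v \<noteq> (\<lambda>_. 0)"
  shows "\<exists>m m'. duo R L Orb m m' \<and> cog m m' \<in> V"
proof -
  have vLin: "v \<in> Lin Orb" using sub vV unfolding subspace_of_def by blast
  define P where "P = {y. v y \<noteq> 0}"
  have "finite P" unfolding P_def using linD2[OF vLin] .
  moreover have "P \<noteq> {}" unfolding P_def using v0 by auto
  moreover have "P \<subseteq> Orb" unfolding P_def using linD1[OF vLin] by blast
  ultimately obtain m where m: "m \<in> P" "\<forall>y\<in>P. colex n y m" using colex_max[of n P] by blast
  have mP: "v m \<noteq> 0" using m(1) unfolding P_def by simp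
  have mmax: "\<forall>y. v y \<noteq> 0 \<longrightarrow> colex n y m" using m(2) unfolding P_def by simp
  note ctx = sub inv vV mP mmax refl[of "v m"]
  obtain w m' where "Inv V m (v m) (n - n) w m'" using Inv_all[OF ctx, of n] by blast
  then have "Inv V m (v m) 0 w m'" by simp
  then show ?thesis using Inv_final[OF ctx] by blast
qed

end

context fl
begin

lemma duoD:
  assumes "duo R L Orb a b"
  shows "a \<in> Orb" "b \<in> Orb" "\<And>i. i < n \<Longrightarrow> L (a ! i) (b ! i)"
    "\<And>i j. i < n \<Longrightarrow> j < n \<Longrightarrow> i < j \<Longrightarrow> L (b ! i) (a ! j)"
    "\<And>i j r. i < n \<Longrightarrow> j < n \<Longrightarrow> R r (a ! i) (b ! j) = R r (a ! i) (a ! j)"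
    "\<And>i j r. i < n \<Longrightarrow> j < n \<Longrightarrow> R r (a ! i) (a ! j) = R r (b ! i) (b ! j)"
    "\<And>i j r. i < n \<Longrightarrow> j < n \<Longrightarrow> R r (b ! i) (b ! j) = R r (b ! i) (a ! j)"
proof -
  have a: "a \<in> Orb" using assms unfolding duo_def by blast
  then have la: "length a = n" by (rule orb_len)
  show "a \<in> Orb" by (rule a)
  show "b \<in> Orb" using assms unfolding duo_def by blast
  show "\<And>i. i < n \<Longrightarrow> L (a ! i) (b ! i)" using assms la unfolding duo_def by simp
  show "\<And>i j. i < n \<Longrightarrow> j < n \<Longrightarrow> i < j \<Longrightarrow> L (b ! i) (a ! j)" using assms la unfolding duo_def by simp
  show "\<And>i j r. i < n \<Longrightarrow> j < n \<Longrightarrow> R r (a ! i) (b ! j) = R r (a ! i) (a ! j)" using assms la unfolding duo_def by simp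
  show "\<And>i j r. i < n \<Longrightarrow> j < n \<Longrightarrow> R r (a ! i) (a ! j) = R r (b ! i) (b ! j)" using assms la unfolding duo_def by simp
  show "\<And>i j r. i < n \<Longrightarrow> j < n \<Longrightarrow> R r (b ! i) (b ! j) = R r (b ! i) (a ! j)" using assms la unfolding duo_def by simp
qed

lemma duo_tab:
  assumes d: "duo R L Orb a b" and ij: "i < n" "j < n"
  shows "R r (a ! i) (b ! j) = R r (a0 ! i) (a0 ! j)" "R r (b ! i) (a ! j) = R r (a0 ! i) (a0 ! j)"
    "L (a ! i) (b ! j) = (i \<le> j)" "L (b ! i) (a ! j) = (i < j)"
proof -
  note D = duoD[OF d]
  show "R r (a ! i) (b ! j) = R r (a0 ! i) (a0 ! j)" using D(5)[OF ij] orb_R[OF D(1) ij] by simp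
  show "R r (b ! i) (a ! j) = R r (a0 ! i) (a0 ! j)" using D(7)[OF ij] orb_R[OF D(2) ij] by simp
  have Lab: "\<And>i j. i < n \<Longrightarrow> j < n \<Longrightarrow> L (a ! i) (b ! j) = (i \<le> j)"
  proof -
    fix i j assume ij: "i < n" "j < n"
    consider "i = j" | "i < j" | "j < i" by linarith
    then show "L (a ! i) (b ! j) = (i \<le> j)"
    proof cases
      case 1 then show ?thesis using D(3) ij by simp
    next
      case 2
      have "L (a ! i) (a ! j)" using orb_L[OF D(1) ij] 2 by simp
      then have "L (a ! i) (b ! j)" using L_trans[OF orb_A[OF D(1) ij(1)] orb_A[OF D(1) ij(2)] orb_A[OF D(2) ij(2)]] D(3)[OF ij(2)] by blast
      then show ?thesis using 2 by simp
    next
      case 3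
      have "L (b ! j) (a ! i)" using D(4)[OF ij(2,1) 3] .
      then have "\<not> L (a ! i) (b ! j)" using L_asym orb_A[OF D(1) ij(1)] orb_A[OF D(2) ij(2)] by blast
      then show ?thesis using 3 by simp
    qed
  qed
  show "L (a ! i) (b ! j) = (i \<le> j)" using Lab[OF ij] .
  show "L (b ! i) (a ! j) = (i < j)"
  proof (cases "i < j")
    case True then show ?thesis using D(4)[OF ij True] by simp
  next
    case False
    then have "L (a ! j) (b ! i)" using Lab[OF ij(2,1)] by simp
    then have "\<not> L (b ! i) (a ! j)" using L_asym orb_A[OF D(1) ij(2)] orb_A[OF D(2) ij(1)] by blast
    then show ?thesis using False by simp
  qed
qed

definition idx :: "nat \<Rightarrow> nat" where "idx i = (if i < n then i else i - n)"
definition LL :: "nat \<Rightarrow> nat \<Rightarrow> bool" where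
  "LL i j = (if i < n then (if j < n then i < j else i \<le> j - n) else (if j < n then i - n < j else i - n < j - n))"

lemma duo_entry:
  assumes d: "duo R L Orb p q" and i: "i < 2 * n" and j: "j < 2 * n"
  shows "R r ((p @ q) ! i) ((p @ q) ! j) = R r (a0 ! idx i) (a0 ! idx j)"
    "L ((p @ q) ! i) ((p @ q) ! j) = LL i j"
    "U u ((p @ q) ! i) = U u (a0 ! idx i)"
    "(p @ q) ! i \<in> A" "(p @ q) ! i \<notin> S"
    "s \<in> S \<Longrightarrow> R r s ((p @ q) ! i) = R r s (a0 ! idx i)"
    "s \<in> S \<Longrightarrow> R r ((p @ q) ! i) s = R r (a0 ! idx i) s"
    "s \<in> S \<Longrightarrow> L s ((p @ q) ! i) = L s (a0 ! idx i)"
    "s \<in> S \<Longrightarrow> L ((p @ q) ! i) s = L (a0 ! idx i) s"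
proof -
  note D = duoD[OF d]
  have lp: "length p = n" using orb_len[OF D(1)] .
  have ei: "(p @ q) ! i = (if i < n then p ! i else q ! (i - n))" using lp by (simp add: nth_append)
  have ej: "(p @ q) ! j = (if j < n then p ! j else q ! (j - n))" using lp by (simp add: nth_append)
  have ii: "idx i < n" "idx j < n" unfolding idx_def using i j by auto
  show "R r ((p @ q) ! i) ((p @ q) ! j) = R r (a0 ! idx i) (a0 ! idx j)"
    using ei ej ii orb_R[OF D(1)] orb_R[OF D(2)] duo_tab(1,2)[OF d] unfolding idx_def
    by (auto split: if_splits)
  show "L ((p @ q) ! i) ((p @ q) ! j) = LL i j"
    using ei ej ii orb_L[OF D(1)] orb_L[OF D(2)] duo_tab(3,4)[OF d] unfolding idx_def LL_def
    by (auto split: if_splits)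
  show "U u ((p @ q) ! i) = U u (a0 ! idx i)"
    using ei ii orb_U[OF D(1)] orb_U[OF D(2)] unfolding idx_def by (auto split: if_splits)
  show "(p @ q) ! i \<in> A"
    using ei ii orb_A[OF D(1)] orb_A[OF D(2)] unfolding idx_def by (auto split: if_splits)
  show "(p @ q) ! i \<notin> S"
    using ei ii orb_S[OF D(1)] orb_S[OF D(2)] unfolding idx_def by (auto split: if_splits)
  assume s: "s \<in> S"
  show "R r s ((p @ q) ! i) = R r s (a0 ! idx i)"
    using ei ii orb_RS1[OF D(1) _ s] orb_RS1[OF D(2) _ s] unfolding idx_def by (auto split: if_splits)
  show "R r ((p @ q) ! i) s = R r (a0 ! idx i) s"
    using ei ii orb_RS2[OF D(1) _ s] orb_RS2[OF D(2) _ s] unfolding idx_def by (auto split: if_splits)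
  show "L s ((p @ q) ! i) = L s (a0 ! idx i)"
    using ei ii orb_LS1[OF D(1) _ s] orb_LS1[OF D(2) _ s] unfolding idx_def by (auto split: if_splits)
  show "L ((p @ q) ! i) s = L (a0 ! idx i) s"
    using ei ii orb_LS2[OF D(1) _ s] orb_LS2[OF D(2) _ s] unfolding idx_def by (auto split: if_splits)
qed

lemma duo_distinct:
  assumes d: "duo R L Orb p q"
  shows "distinct (p @ q)"
proof -
  note D = duoD[OF d]
  have lp: "length p = n" using orb_len[OF D(1)] .
  have lq: "length q = n" using orb_len[OF D(2)] .
  have "set p \<inter> set q = {}"
  proof (rule ccontr)
    assume "set p \<inter> set q \<noteq> {}"
    then obtain i j where ij: "i < n" "j < n" "p ! i = q ! j" using lp lq by (metis disjoint_iff in_set_conv_nth)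
    have e1: "L (p ! i) (q ! j) = (i \<le> j)" using duo_tab(3)[OF d ij(1,2)] .
    have e2: "L (q ! j) (p ! i) = (j < i)" using duo_tab(4)[OF d ij(2,1)] .
    have "\<not> L (q ! j) (q ! j)" using L_irrefl orb_A[OF D(2) ij(2)] by blast
    then have "\<not> (i \<le> j)" "\<not> (j < i)" using e1 e2 ij(3) by simp_all
    then show False by linarith
  qed
  then show ?thesis using orb_distinct[OF D(1)] orb_distinct[OF D(2)] by simp
qed

lemma duo_move:
  assumes d1: "duo R L Orb m m'" and d2: "duo R L Orb a b"
  shows "\<exists>h\<in>G. map h m = a \<and> map h m' = b"
proof -
  note D1 = duoD[OF d1] and D2 = duoD[OF d2]
  have l: "length m = n" "length m' = n" "length a = n" "length b = n"
    using orb_len D1(1,2) D2(1,2) by auto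
  have len: "length (a @ b) = length (m @ m')" using l by simp
  have lxs: "length (m @ m') = 2 * n" using l by simp
  have xA: "set (m @ m') \<subseteq> A"
    using duo_entry(4)[OF d1] lxs by (metis in_set_conv_nth subsetI)
  have yA: "set (a @ b) \<subseteq> A"
    using duo_entry(4)[OF d2] lxs len by (metis in_set_conv_nth subsetI)
  have xS: "set (m @ m') \<inter> S = {}"
    using duo_entry(5)[OF d1] lxs by (metis disjoint_iff in_set_conv_nth)
  have yS: "set (a @ b) \<inter> S = {}"
    using duo_entry(5)[OF d2] lxs len by (metis disjoint_iff in_set_conv_nth)
  have "\<exists>h\<in>G. map h (m @ m') = a @ b"
  proof (rule homl[OF len duo_distinct[OF d1] xA yA xS yS])
    show "\<forall>i<length (m @ m'). \<forall>j<length (m @ m'). (\<forall>r. R r ((m @ m') ! i) ((m @ m') ! j) = R r ((a @ b) ! i) ((a @ b) ! j)) \<and>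
        L ((m @ m') ! i) ((m @ m') ! j) = L ((a @ b) ! i) ((a @ b) ! j)"
      using duo_entry(1,2)[OF d1] duo_entry(1,2)[OF d2] lxs by simp
    show "\<forall>i<length (m @ m'). \<forall>p. U p ((m @ m') ! i) = U p ((a @ b) ! i)"
      using duo_entry(3)[OF d1] duo_entry(3)[OF d2] lxs by simp
    show "\<forall>i<length (m @ m'). \<forall>s\<in>S. (\<forall>r. R r s ((m @ m') ! i) = R r s ((a @ b) ! i) \<and> R r ((m @ m') ! i) s = R r ((a @ b) ! i) s) \<and>
        L s ((m @ m') ! i) = L s ((a @ b) ! i) \<and> L ((m @ m') ! i) s = L ((a @ b) ! i) s"
      using duo_entry(6,7,8,9)[OF d1] duo_entry(6,7,8,9)[OF d2] lxs by simp
  qed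
  then obtain h where h: "h \<in> G" "map h (m @ m') = a @ b" by blast
  have "map h m = a" "map h m' = b" using h(2) l by (simp_all add: append_eq_append_conv)
  then show ?thesis using h(1) by blast
qed

end

lemma sum_closed:
  assumes sub: "subspace_of V W" and fin: "finite C" and CV: "C \<subseteq> V"
  shows "(\<lambda>y. \<Sum>w\<in>C. cc w * w y) \<in> V"
  using fin CV
proof (induction C rule: finite_induct)
  case empty
  then show ?case using sub unfolding subspace_of_def by simp
next
  case (insert u C)
  have uV: "u \<in> V" using insert by simp
  have IH: "(\<lambda>y. \<Sum>w\<in>C. cc w * w y) \<in> V" using insert by simp
  have su: "(\<lambda>y. cc u * u y) \<in> V" using sub uV unfolding subspace_of_def by blast
  have addc: "\<forall>v\<in>V. \<forall>w\<in>V. (\<lambda>x. v x + w x) \<in> V" using sub unfolding subspace_of_def by blast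
  have "(\<lambda>y. cc u * u y + (\<Sum>w\<in>C. cc w * w y)) \<in> V"
    using addc[rule_format, OF su IH] by simp
  moreover have "(\<lambda>y. \<Sum>w\<in>insert u C. cc w * w y) = (\<lambda>y. cc u * u y + (\<Sum>w\<in>C. cc w * w y))"
    using insert(1,2) by simp
  ultimately show ?case by simp
qed

context fl
begin

lemma id_G: "id \<in> G"
  unfolding autS_def oemb_def emb_def by simp

lemma a0O: "a0 \<in> Orb"
proof -
  have "a0 = map id a0" by simp
  then show ?thesis unfolding orbit_def using id_G by blast
qed

lemma duo_ne: "duo R L Orb p q \<Longrightarrow> \<forall>i<length p. p ! i \<noteq> q ! i"
proof (intro allI impI)
  fix i assume d: "duo R L Orb p q" and i: "i < length p"
  have i': "i < n" using i orb_len[OF duoD(1)[OF d]] by simp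
  have "L (p ! i) (q ! i)" using duoD(3)[OF d i'] .
  show "p ! i \<noteq> q ! i"
  proof
    assume e: "p ! i = q ! i"
    have "L (p ! i) (p ! i)" using \<open>L (p ! i) (q ! i)\<close> e by simp
    then show False using L_irrefl[OF orb_A[OF duoD(1)[OF d] i']] by contradiction
  qed
qed

lemma mix_entry:
  assumes d: "duo R L Orb a b" and i: "i < n" and j: "j < n"
  shows "R r (mixJ a b J ! i) (mixJ a b J ! j) = R r (a0 ! i) (a0 ! j)"
    "L (mixJ a b J ! i) (mixJ a b J ! j) = (i < j)"
    "U u (mixJ a b J ! i) = U u (a0 ! i)"
    "mixJ a b J ! i \<in> A" "mixJ a b J ! i \<notin> S"
    "s \<in> S \<Longrightarrow> R r s (mixJ a b J ! i) = R r s (a0 ! i)"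
    "s \<in> S \<Longrightarrow> R r (mixJ a b J ! i) s = R r (a0 ! i) s"
    "s \<in> S \<Longrightarrow> L s (mixJ a b J ! i) = L s (a0 ! i)"
    "s \<in> S \<Longrightarrow> L (mixJ a b J ! i) s = L (a0 ! i) s"
proof -
  note D = duoD[OF d]
  have la: "length a = n" using orb_len[OF D(1)] .
  have ei: "mixJ a b J ! i = (if i \<in> J then b ! i else a ! i)" using mixJ_nth[of i a b J] la i by simp
  have ej: "mixJ a b J ! j = (if j \<in> J then b ! j else a ! j)" using mixJ_nth[of j a b J] la j by simp
  show "R r (mixJ a b J ! i) (mixJ a b J ! j) = R r (a0 ! i) (a0 ! j)"
    using ei ej orb_R[OF D(1) i j] orb_R[OF D(2) i j] duo_tab(1,2)[OF d i j] by (auto split: if_splits)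
  show "L (mixJ a b J ! i) (mixJ a b J ! j) = (i < j)"
  proof (cases "i = j")
    case True
    then show ?thesis using L_irrefl orb_A[OF D(1) i] orb_A[OF D(2) i] ei by auto
  next
    case False
    then show ?thesis using ei ej orb_L[OF D(1) i j] orb_L[OF D(2) i j] duo_tab(3,4)[OF d i j]
      by (auto split: if_splits)
  qed
  show "U u (mixJ a b J ! i) = U u (a0 ! i)"
    using ei orb_U[OF D(1) i] orb_U[OF D(2) i] by (auto split: if_splits)
  show "mixJ a b J ! i \<in> A" using ei orb_A[OF D(1) i] orb_A[OF D(2) i] by (auto split: if_splits)
  show "mixJ a b J ! i \<notin> S" using ei orb_S[OF D(1) i] orb_S[OF D(2) i] by (auto split: if_splits)
  assume s: "s \<in> S"
  show "R r s (mixJ a b J ! i) = R r s (a0 ! i)"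
    using ei orb_RS1[OF D(1) i s] orb_RS1[OF D(2) i s] by (auto split: if_splits)
  show "R r (mixJ a b J ! i) s = R r (a0 ! i) s"
    using ei orb_RS2[OF D(1) i s] orb_RS2[OF D(2) i s] by (auto split: if_splits)
  show "L s (mixJ a b J ! i) = L s (a0 ! i)"
    using ei orb_LS1[OF D(1) i s] orb_LS1[OF D(2) i s] by (auto split: if_splits)
  show "L (mixJ a b J ! i) s = L (a0 ! i) s"
    using ei orb_LS2[OF D(1) i s] orb_LS2[OF D(2) i s] by (auto split: if_splits)
qed

lemma mixJ_orb:
  assumes d: "duo R L Orb a b"
  shows "mixJ a b J \<in> Orb"
proof -
  note D = duoD[OF d]
  have la: "length a = n" using orb_len[OF D(1)] .
  have len: "length (mixJ a b J) = length a0" using la by simp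
  have xA: "set a0 \<subseteq> A" using orb_setA[OF a0O] .
  have yA: "set (mixJ a b J) \<subseteq> A" using mix_entry(4)[OF d] la by (metis in_set_conv_nth subsetI mixJ_length)
  have xS: "set a0 \<inter> S = {}" using orb_S[OF a0O] by (metis disjoint_iff in_set_conv_nth)
  have yS: "set (mixJ a b J) \<inter> S = {}" using mix_entry(5)[OF d] la by (metis disjoint_iff in_set_conv_nth mixJ_length)
  have "\<exists>g\<in>G. map g a0 = mixJ a b J"
  proof (rule homl[OF len orb_distinct[OF a0O] xA yA xS yS])
    show "\<forall>i<length a0. \<forall>j<length a0. (\<forall>r. R r (a0 ! i) (a0 ! j) = R r (mixJ a b J ! i) (mixJ a b J ! j)) \<and>
        L (a0 ! i) (a0 ! j) = L (mixJ a b J ! i) (mixJ a b J ! j)"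
      using mix_entry(1,2)[OF d] a0L by simp
    show "\<forall>i<length a0. \<forall>p. U p (a0 ! i) = U p (mixJ a b J ! i)"
      using mix_entry(3)[OF d] by simp
    show "\<forall>i<length a0. \<forall>s\<in>S. (\<forall>r. R r s (a0 ! i) = R r s (mixJ a b J ! i) \<and> R r (a0 ! i) s = R r (mixJ a b J ! i) s) \<and>
        L s (a0 ! i) = L s (mixJ a b J ! i) \<and> L (a0 ! i) s = L (mixJ a b J ! i) s"
      using mix_entry(6,7,8,9)[OF d] by simp
  qed
  then show ?thesis unfolding orbit_def by (metis (mono_tags, lifting) mem_Collect_eq)
qed

lemma cog_supp_orb:
  assumes d: "duo R L Orb a b"
  shows "finite {y. cog a b y \<noteq> (0::'k::field)}" "{y. cog a b y \<noteq> (0::'k)} \<subseteq> Orb"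
proof -
  have sub: "{y. cog a b y \<noteq> (0::'k)} \<subseteq> mixJ a b ` Pow {..<length a}" using cog_supp by blast
  then show "finite {y. cog a b y \<noteq> (0::'k)}" by (rule finite_subset) simp
  show "{y. cog a b y \<noteq> (0::'k)} \<subseteq> Orb" using sub mixJ_orb[OF d] by blast
qed

lemma Cog_Lin: "Cog R L Orb \<subseteq> (Lin Orb :: ('a list \<Rightarrow> 'k::field) set)"
proof
  fix u :: "'a list \<Rightarrow> 'k" assume "u \<in> Cog R L Orb"
  then obtain C cc where C: "finite C" "C \<subseteq> {cog a b | a b. duo R L Orb a b}" "u = (\<lambda>y. \<Sum>w\<in>C. cc w * w y)"
    unfolding Cog_def by blast
  have supp: "{y. u y \<noteq> 0} \<subseteq> (\<Union>w\<in>C. {y. w y \<noteq> 0})"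
  proof
    fix y assume "y \<in> {y. u y \<noteq> 0}"
    then have "(\<Sum>w\<in>C. cc w * w y) \<noteq> 0" using C(3) by simp
    then obtain w where "w \<in> C" "cc w * w y \<noteq> 0" by (meson sum.neutral)
    then show "y \<in> (\<Union>w\<in>C. {y. w y \<noteq> 0})" by auto
  qed
  have each: "\<And>w. w \<in> C \<Longrightarrow> finite {y. w y \<noteq> 0} \<and> {y. w y \<noteq> 0} \<subseteq> Orb"
  proof -
    fix w assume "w \<in> C"
    then obtain a b where "w = cog a b" "duo R L Orb a b" using C(2) by blast
    then show "finite {y. w y \<noteq> 0} \<and> {y. w y \<noteq> 0} \<subseteq> Orb" using cog_supp_orb by blast
  qed
  have "finite (\<Union>w\<in>C. {y. w y \<noteq> 0})" using C(1) each by blast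
  then have "finite {y. u y \<noteq> 0}" using supp finite_subset by blast
  moreover have "{y. u y \<noteq> 0} \<subseteq> Orb" using supp each by blast
  ultimately show "u \<in> Lin Orb" unfolding Lin_def by blast
qed

lemma Lin_sub: "subspace_of (Lin Orb :: ('a list \<Rightarrow> 'k::field) set) (Lin Orb)"
  unfolding subspace_of_def
proof (intro conjI ballI allI)
  show "Lin Orb \<subseteq> Lin Orb" by simp
  show "(\<lambda>_. 0::'k) \<in> Lin Orb" unfolding Lin_def by simp
next
  fix v w :: "'a list \<Rightarrow> 'k" assume v: "v \<in> Lin Orb" and w: "w \<in> Lin Orb"
  have "{x. v x + w x \<noteq> 0} \<subseteq> {x. v x \<noteq> 0} \<union> {x. w x \<noteq> 0}" by auto
  then show "(\<lambda>x. v x + w x) \<in> Lin Orb" using v w unfolding Lin_def by (auto intro: finite_subset)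
next
  fix c :: 'k and v :: "'a list \<Rightarrow> 'k" assume v: "v \<in> Lin Orb"
  have "{x. c * v x \<noteq> 0} \<subseteq> {x. v x \<noteq> 0}" by auto
  then show "(\<lambda>x. c * v x) \<in> Lin Orb" using v unfolding Lin_def by (auto intro: finite_subset)
qed

lemma Lin_inv: "invariant G (Lin Orb :: ('a list \<Rightarrow> 'k::field) set)"
  unfolding invariant_def
proof (intro ballI)
  fix g and v :: "'a list \<Rightarrow> 'k" assume g: "g \<in> G" and v: "v \<in> Lin Orb"
  have "{y. act g v y \<noteq> 0} \<subseteq> map g ` {x. v x \<noteq> 0}"
  proof
    fix y assume "y \<in> {y. act g v y \<noteq> 0}"
    then have "act g v y \<noteq> 0" by simp
    then obtain x where "v x \<noteq> 0" "map g x = y" using act_zero by blast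
    then show "y \<in> map g ` {x. v x \<noteq> 0}" by blast
  qed
  moreover have "map g ` {x. v x \<noteq> 0} \<subseteq> Orb" using v g orb_map unfolding Lin_def by blast
  moreover have "finite (map g ` {x. v x \<noteq> 0})" using v unfolding Lin_def by simp
  ultimately show "act g v \<in> Lin Orb" unfolding Lin_def by (auto intro: finite_subset)
qed

lemma act_cog:
  assumes h: "h \<in> G" and d1: "duo R L Orb m m'" and d2: "duo R L Orb a b"
    and ha: "map h m = a" and hb: "map h m' = b"
  shows "act h (cog m m') = (cog a b :: 'a list \<Rightarrow> 'k::field)"
proof
  fix y
  note D1 = duoD[OF d1] and D2 = duoD[OF d2]
  have l: "length m = n" "length m' = n" "length a = n" "length b = n"
    using orb_len D1(1,2) D2(1,2) by auto
  have suppA: "\<forall>z. cog m m' z \<noteq> (0::'k) \<longrightarrow> set z \<subseteq> A"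
    using cog_supp_orb(2)[OF d1] orb_setA by blast
  have mm: "\<And>J. map h (mixJ m m' J) = mixJ a b J" using map_mixJ[of m' m h] l ha hb by simp
  show "act h (cog m m') y = (cog a b y :: 'k)"
  proof (cases "y \<in> mixJ a b ` Pow {..<length a}")
    case True
    then obtain J where J: "J \<subseteq> {..<length a}" "y = mixJ a b J" by blast
    have J': "J \<subseteq> {..<length m}" using J l by simp
    have "set (mixJ m m' J) \<subseteq> A" using orb_setA[OF mixJ_orb[OF d1]] .
    then have "act h (cog m m') (map h (mixJ m m' J)) = (cog m m' (mixJ m m' J) :: 'k)"
      by (rule act_map[OF aut_inj[OF h] suppA])
    then have "act h (cog m m') y = (cog m m' (mixJ m m' J) :: 'k)"
      using J(2) mm[of J] by simp
    also have "\<dots> = (-1::'k) ^ card J" by (rule cog_at[OF duo_ne[OF d1] J'])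
    also have "\<dots> = cog a b y"
    proof -
      have "cog a b (mixJ a b J) = (-1::'k) ^ card J" by (rule cog_at[OF duo_ne[OF d2] J(1)])
      then show ?thesis using J(2) by simp
    qed
    finally show ?thesis .
  next
    case False
    have "\<forall>z. cog m m' z \<noteq> (0::'k) \<longrightarrow> map h z \<noteq> y"
    proof (intro allI impI)
      fix z assume "cog m m' z \<noteq> (0::'k)"
      then obtain J where J: "J \<subseteq> {..<length m}" "z = mixJ m m' J" using cog_supp by blast
      then have "map h z = mixJ a b J" using mm by simp
      then show "map h z \<noteq> y" using False J(1) l by auto
    qed
    then have "act h (cog m m') y = (0::'k)" by (rule act_zero)
    moreover have "cog a b y = (0::'k)" using False by (rule cog_off)
    ultimately show ?thesis by simp
  qed
qed

lemma part1:
  fixes V :: "('a list \<Rightarrow> 'k::field) set"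
  assumes sub: "subspace_of V (Lin Orb)" and nz: "V \<noteq> {\<lambda>_. 0}" and inv: "invariant G V"
  shows "Cog R L Orb \<subseteq> V"
proof -
  have z: "(\<lambda>_. 0) \<in> V" using sub unfolding subspace_of_def by blast
  obtain v where v: "v \<in> V" "v \<noteq> (\<lambda>_. 0)" using nz z by blast
  obtain m m' where mm: "duo R L Orb m m'" "cog m m' \<in> V" using process[OF sub inv v] by blast
  have allc: "\<And>a b. duo R L Orb a b \<Longrightarrow> cog a b \<in> V"
  proof -
    fix a b assume d: "duo R L Orb a b"
    obtain h where h: "h \<in> G" "map h m = a" "map h m' = b" using duo_move[OF mm(1) d] by blast
    have "act h (cog m m') \<in> V" using inv mm(2) h(1) unfolding invariant_def by blast
    moreover have "act h (cog m m') = (cog a b :: 'a list \<Rightarrow> 'k)" by (rule act_cog[OF h(1) mm(1) d h(2,3)])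
    ultimately show "cog a b \<in> V" by simp
  qed
  show ?thesis
  proof
    fix u :: "'a list \<Rightarrow> 'k" assume "u \<in> Cog R L Orb"
    then obtain C cc where C: "finite C" "C \<subseteq> {cog a b | a b. duo R L Orb a b}" "u = (\<lambda>y. \<Sum>w\<in>C. cc w * w y)"
      unfolding Cog_def by blast
    have "C \<subseteq> V" using C(2) allc by blast
    then show "u \<in> V" using sum_closed[OF sub C(1)] C(3) by simp
  qed
qed

lemma part2: "Cog R L Orb \<noteq> {\<lambda>_. (0::'k::field)}"
proof -
  define v :: "'a list \<Rightarrow> 'k" where "v = (\<lambda>y. if y = a0 then 1 else 0)"
  have sv: "{y. v y \<noteq> 0} = {a0}" unfolding v_def by auto
  have "v \<in> Lin Orb" unfolding Lin_def using sv a0O by simp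
  moreover have "v \<noteq> (\<lambda>_. 0)"
  proof
    assume "v = (\<lambda>_. 0)"
    then have "v a0 = 0" by simp
    then show False unfolding v_def by simp
  qed
  ultimately obtain m m' where mm: "duo R L Orb m m'" "cog m m' \<in> (Lin Orb :: ('a list \<Rightarrow> 'k) set)"
    using process[OF Lin_sub Lin_inv] by blast
  have inC: "cog m m' \<in> (Cog R L Orb :: ('a list \<Rightarrow> 'k) set)"
    unfolding Cog_def mem_Collect_eq
  proof (intro exI conjI)
    show "finite {cog m m' :: 'a list \<Rightarrow> 'k}" by simp
    show "{cog m m' :: 'a list \<Rightarrow> 'k} \<subseteq> {cog a b |a b. duo R L Orb a b}" using mm(1) by blast
    show "(cog m m' :: 'a list \<Rightarrow> 'k) = (\<lambda>y. \<Sum>w\<in>{cog m m'}. (\<lambda>_. 1::'k) w * w y)" by simp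
  qed
  have c1: "cog m m' (mixJ m m' {}) = (1::'k)" using cog_at[OF duo_ne[OF mm(1)], of "{}"] by simp
  have "cog m m' \<noteq> (\<lambda>_. (0::'k))"
  proof
    assume "cog m m' = (\<lambda>_. (0::'k))"
    then have "cog m m' (mixJ m m' {}) = (0::'k)" by simp
    then show False using c1 by simp
  qed
  then show ?thesis using inC by blast
qed

lemma part3:
  fixes W :: "('a list \<Rightarrow> 'k::field) set"
  assumes sub: "subspace_of W (Cog R L Orb)" and inv: "invariant G W"
  shows "W = {\<lambda>_. 0} \<or> W = Cog R L Orb"
proof (cases "W = {\<lambda>_. 0}")
  case True then show ?thesis by simp
next
  case False
  have "subspace_of W (Lin Orb)" using sub Cog_Lin unfolding subspace_of_def by blast
  then have "Cog R L Orb \<subseteq> W" using part1 False inv by blast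
  moreover have "W \<subseteq> Cog R L Orb" using sub unfolding subspace_of_def by blast
  ultimately show ?thesis by blast
qed

end

theorem mainTheorem13:
  fixes F :: "('p::finite, 'r::finite) fstruct set"
    and A :: "'a set" and U :: "'p \<Rightarrow> 'a \<Rightarrow> bool" and R :: "'r \<Rightarrow> 'a \<Rightarrow> 'a \<Rightarrow> bool"
    and L :: "'a \<Rightarrow> 'a \<Rightarrow> bool"
    and S :: "'a set" and a :: "'a list"
  assumes "\<forall>M\<in>F. irreducible_fstruct M"
    and "fraisse_limit_ordered_forb F A U R L"
    and "finite S" and "S \<subseteq> A"
    and "S_ordered A L S a"
  shows "(\<forall>V :: ('a list \<Rightarrow> 'k::field) set.
            subspace_of V (Lin (orbit (autS A U R L S) a)) \<and> V \<noteq> {\<lambda>_. 0} \<and>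
            invariant (autS A U R L S) V
            \<longrightarrow> Cog R L (orbit (autS A U R L S) a) \<subseteq> V)
       \<and> Cog R L (orbit (autS A U R L S) a) \<noteq> {\<lambda>_. (0::'k)}
       \<and> (\<forall>W :: ('a list \<Rightarrow> 'k) set.
            subspace_of W (Cog R L (orbit (autS A U R L S) a)) \<and>
            invariant (autS A U R L S) W
            \<longrightarrow> W = {\<lambda>_. 0} \<or> W = Cog R L (orbit (autS A U R L S) a))"
proof -
  interpret fl F A U R L S a using assms by unfold_locales
  show ?thesis using part1 part2 part3 by blast
qed


end
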